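(* Assume the delay distribution is supported in $\{0,1,\dots,d\}$ for some $d\ge0$, and consider ODAAF run with an arbitrary strictly increasing sequence of positive integers $(n_m)$. For a phase $m$ let $$w_m=\sqrt{\frac{\log(T\tilde\Delta_m^2)}{2n_m}}+\frac{md}{n_m}.$$ Then for any phase $m$ and arm $j$, $$\mathbb{P}\big(j\in\mathcal{A}_m\text{ and }|\bar X_{m,j}-\mu_j|>w_m\big)\le\frac{2}{T\tilde\Delta_m^2}.$$
   Context: Setting (stochastic bandit with delayed, aggregated anonymous feedback): there are $K\ge 2$ arms $\mathcal{A}=\{1,\dots,K\}$. Arm $j$ has a reward distribution $\zeta_j$ supported in $[0,1]$ with mean $\mu_j$. There is a single delay distribution on $\{0,1,2,\dots\}$ common to all arms; $\tau$ denotes a generic random variable with this distribution. The random variables $(R_{l,j},\tau_{l,j})_{l\ge1,j}$ are mutually independent, $R_{l,j}\sim\zeta_j$, $\tau_{l,j}\sim\tau$. If the player chooses arm $J_l$ in round $l$, at the end of round $t$ it observes only $X_t=\sum_{l=1}^t R_{l,J_l}\mathbf{1}\{l+\tau_{l,J_l}=t\}$. The horizon $T$ is known. Algorithm ODAAF with a strictly increasing sequence of positive integers $(n_m)$, $n_0=0$: phases $m=1,2,\dots$ while $t\le T$, tolerance $\tilde\Delta_m=2^{-m}$, $\mathcal{A}_1=\mathcal{A}$, $T_j(0)=\emptyset$. In phase $m$: (1) for each $j\in\mathcal{A}_m$ in a fixed order, set $T_j(m)=T_j(m-1)$ and play $j$ in consecutive rounds, adding each round index to $T_j(m)$, until $|T_j(m)|=n_m$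 (stopping at round $T$); (2) compute $\bar X_{m,j}=|T_j(m)|^{-1}\sum_{t\in T_j(m)}X_t$ and set $\mathcal{A}_{m+1}=\{j\in\mathcal{A}_m:\bar X_{m,j}+\tilde\Delta_m\ge\max_{j'\in\mathcal{A}_m}\bar X_{m,j'}\}$; (3) bridge period: pick an arm of $\mathcal{A}_{m+1}$ and play it for $n_m-n_{m-1}$ consecutive rounds; these rounds are not added to any $T_j(m)$ and their observations are discarded. *)

theory Defs
  imports "HOL-Probability.Probability"
begin

text \<open>Deterministic description of one run of ODAAF, given the realised rewards
  r l j (reward of arm j if played in round l) and delays dl l j.
  Rounds are numbered 1, 2, 3, ...; arms are 1..K.\<close>

record odaaf_state =
  act   :: "nat set"
  start :: nat
  samp  :: "nat \<Rightarrow> nat set"  (* T_j(m): sampling rounds of arm j so far *)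
  play  :: "nat \<Rightarrow> nat"
  xbar  :: "nat \<Rightarrow> real"

definition obs :: "(nat \<Rightarrow> nat \<Rightarrow> real) \<Rightarrow> (nat \<Rightarrow> nat \<Rightarrow> nat) \<Rightarrow> (nat \<Rightarrow> nat) \<Rightarrow> nat \<Rightarrow> real" where
  "obs r dl P t = (\<Sum>l\<in>{1..t}. r l (P l) * (if l + dl l (P l) = t then 1 else 0))"

definition tol :: "nat \<Rightarrow> real" where
  "tol m = (1/2) ^ m"

text \<open>Arms of the active set are played in
  increasing order, each until its sample set has n m elements; then the averages are
  computed, arms are eliminated, and a bridge period of n m - n (m-1) rounds follows,
  playing the arm pick m A_{m+1}.\<close>
definition odaaf_phase ::
  "(nat \<Rightarrow> nat) \<Rightarrow> (nat \<Rightarrow> nat set \<Rightarrow> nat) \<Rightarrow> (nat \<Rightarrow> nat \<Rightarrow> real) \<Rightarrow> (nat \<Rightarrow> nat \<Rightarrow> nat)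
    \<Rightarrow> nat \<Rightarrow> odaaf_state \<Rightarrow> odaaf_state" where
  "odaaf_phase n pick r dl m st = (let
      arms = sorted_list_of_set (act st);
      lens = map (\<lambda>j. n m - card (samp st j)) arms;
      bstart = (\<lambda>i. start st + sum_list (take i lens));
      e = start st + sum_list lens;
      P' = (\<lambda>t. if start st \<le> t \<and> t < e then arms ! (LEAST i. t < bstart (Suc i)) else play st t);
      S' = (\<lambda>j. samp st j \<union> {t. start st \<le> t \<and> t < e \<and> P' t = j});
      Xb = (\<lambda>j. (\<Sum>t\<in>S' j. obs r dl P' t) / real (card (S' j)));
      A' = {j \<in> act st. Xb j + tol m \<ge> Max (Xb ` act st)};
      L = n m - n (m - 1);
      P'' = (\<lambda>t. if e \<le> t \<and> t < e + L then pick m A' else P' t)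
    in \<lparr>act = A', start = e + L, samp = S', play = P'', xbar = Xb\<rparr>)"

text \<open>odaaf_run ... m is the state after phase m (m = 0: initial state).  Hence
  A_m = act (odaaf_run ... (m-1)) and \<bar>X_{m,j} = xbar (odaaf_run ... m) j.\<close>
fun odaaf_run ::
  "nat \<Rightarrow> (nat \<Rightarrow> nat) \<Rightarrow> (nat \<Rightarrow> nat set \<Rightarrow> nat) \<Rightarrow> (nat \<Rightarrow> nat \<Rightarrow> real) \<Rightarrow> (nat \<Rightarrow> nat \<Rightarrow> nat)
    \<Rightarrow> nat \<Rightarrow> odaaf_state" where
  "odaaf_run K n pick r dl 0 =
     \<lparr>act = {1..K}, start = 1, samp = (\<lambda>_. {}), play = (\<lambda>_. 0), xbar = (\<lambda>_. 0)\<rparr>"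
| "odaaf_run K n pick r dl (Suc m) = odaaf_phase n pick r dl (Suc m) (odaaf_run K n pick r dl m)"

end

theory Submission
  imports Defs
begin

definition arms :: "odaaf_state \<Rightarrow> nat list" where
  "arms st = sorted_list_of_set (act st)"
definition lens :: "(nat\<Rightarrow>nat) \<Rightarrow> nat \<Rightarrow> odaaf_state \<Rightarrow> nat list" where
  "lens n m st = map (\<lambda>j. n m - card (samp st j)) (arms st)"
definition bS :: "(nat\<Rightarrow>nat) \<Rightarrow> nat \<Rightarrow> odaaf_state \<Rightarrow> nat \<Rightarrow> nat" where
  "bS n m st i = start st + sum_list (take i (lens n m st))"
definition pe :: "(nat\<Rightarrow>nat) \<Rightarrow> nat \<Rightarrow> odaaf_state \<Rightarrow> nat" where
  "pe n m st = start st + sum_list (lens n m st)"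
definition pP :: "(nat\<Rightarrow>nat) \<Rightarrow> nat \<Rightarrow> odaaf_state \<Rightarrow> nat \<Rightarrow> nat" where
  "pP n m st t = (if start st \<le> t \<and> t < pe n m st then arms st ! (LEAST i. t < bS n m st (Suc i)) else play st t)"
definition pS :: "(nat\<Rightarrow>nat) \<Rightarrow> nat \<Rightarrow> odaaf_state \<Rightarrow> nat \<Rightarrow> nat set" where
  "pS n m st j = samp st j \<union> {t. start st \<le> t \<and> t < pe n m st \<and> pP n m st t = j}"
definition pX :: "(nat\<Rightarrow>nat) \<Rightarrow> (nat \<Rightarrow> nat \<Rightarrow> real) \<Rightarrow> (nat \<Rightarrow> nat \<Rightarrow> nat) \<Rightarrow> nat \<Rightarrow> odaaf_state \<Rightarrow> nat \<Rightarrow> real" where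
  "pX n r dl m st j = (\<Sum>t\<in>pS n m st j. obs r dl (pP n m st) t) / real (card (pS n m st j))"
definition pA :: "(nat\<Rightarrow>nat) \<Rightarrow> (nat \<Rightarrow> nat \<Rightarrow> real) \<Rightarrow> (nat \<Rightarrow> nat \<Rightarrow> nat) \<Rightarrow> nat \<Rightarrow> odaaf_state \<Rightarrow> nat set" where
  "pA n r dl m st = {j \<in> act st. pX n r dl m st j + tol m \<ge> Max (pX n r dl m st ` act st)}"
definition pL :: "(nat\<Rightarrow>nat) \<Rightarrow> nat \<Rightarrow> nat" where
  "pL n m = n m - n (m - 1)"
definition pP2 :: "(nat\<Rightarrow>nat) \<Rightarrow> (nat \<Rightarrow> nat set \<Rightarrow> nat) \<Rightarrow> nat set \<Rightarrow> nat \<Rightarrow> odaaf_state \<Rightarrow> nat \<Rightarrow> nat" where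
  "pP2 n pick A m st t = (if pe n m st \<le> t \<and> t < pe n m st + pL n m then pick m A else pP n m st t)"

lemma phase_eq: "odaaf_phase n pick r dl m st =
  \<lparr>act = pA n r dl m st, start = pe n m st + pL n m, samp = pS n m st,
   play = pP2 n pick (pA n r dl m st) m st, xbar = pX n r dl m st\<rparr>"
  unfolding odaaf_phase_def Let_def pA_def pX_def pS_def pP_def pe_def bS_def lens_def arms_def pL_def pP2_def
  by simp
lemma length_lens[simp]: "length (lens n m st) = length (arms st)"
  by (simp add: lens_def)

lemma bS_mono: "i \<le> i' \<Longrightarrow> bS n m st i \<le> bS n m st i'"
proof -
  assume "i \<le> i'"
  then obtain k where k: "i' = i + k" using le_Suc_ex by blast
  show ?thesis unfolding bS_def k take_add by simp
qed

lemma bS_Suc: "i < length (arms st) \<Longrightarrow> bS n m st (Suc i) = bS n m st i + (n m - card (samp st (arms st ! i)))"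
  unfolding bS_def by (simp add: take_Suc_conv_app_nth lens_def)

lemma bS_len: "bS n m st (length (arms st)) = pe n m st"
  unfolding bS_def pe_def by simp

lemma bS_0: "bS n m st 0 = start st"
  unfolding bS_def by simp

lemma set_arms: "finite (act st) \<Longrightarrow> set (arms st) = act st"
  by (simp add: arms_def)

lemma distinct_arms: "distinct (arms st)"
  by (simp add: arms_def)

lemma least_char:
  assumes "start st \<le> t" "t < pe n m st" "act st \<noteq> {}" "finite (act st)"
  defines "q \<equiv> (LEAST i. t < bS n m st (Suc i))"
  shows "q < length (arms st) \<and> bS n m st q \<le> t \<and> t < bS n m st (Suc q)"
proof -
  have len: "length (arms st) > 0" using assms(3,4) set_arms[of st]
    by (metis length_greater_0_conv set_empty)
  have w: "t < bS n m st (Suc (length (arms st) - 1))"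
    using len assms(2) bS_len[of n m st] by simp
  have q1: "t < bS n m st (Suc q)" unfolding q_def by (rule LeastI[of "\<lambda>i. t < bS n m st (Suc i)", OF w])
  have q2: "q \<le> length (arms st) - 1" unfolding q_def by (rule Least_le[of "\<lambda>i. t < bS n m st (Suc i)", OF w])
  have q3: "bS n m st q \<le> t"
  proof (cases q)
    case 0 then show ?thesis using assms(1) bS_0 by simp
  next
    case (Suc q')
    have "q' < q" using Suc by simp
    then have "\<not> t < bS n m st (Suc q')" unfolding q_def by (rule not_less_Least)
    then show ?thesis using Suc by simp
  qed
  show ?thesis using q1 q2 q3 len by (simp add: less_eq_Suc_le)
qed

lemma pP_in_act:
  assumes "start st \<le> t" "t < pe n m st" "act st \<noteq> {}" "finite (act st)"
  shows "pP n m st t \<in> act st"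
proof -
  have "(LEAST i. t < bS n m st (Suc i)) < length (arms st)" using least_char[OF assms] by blast
  then show ?thesis using assms set_arms[of st] unfolding pP_def by (metis nth_mem)
qed

lemma block_eq:
  assumes "finite (act st)" "p < length (arms st)" "arms st ! p = j"
  shows "{t. start st \<le> t \<and> t < pe n m st \<and> pP n m st t = j} = {bS n m st p ..< bS n m st (Suc p)}"
proof (intro set_eqI iffI)
  have ne: "act st \<noteq> {}" using assms set_arms[of st] by (metis length_pos_if_in_set nth_mem less_zeroE list.size(3) empty_iff)
  fix t assume "t \<in> {t. start st \<le> t \<and> t < pe n m st \<and> pP n m st t = j}"
  then have t: "start st \<le> t" "t < pe n m st" "pP n m st t = j" by auto
  define q where "q = (LEAST i. t < bS n m st (Suc i))"
  have qc: "q < length (arms st) \<and> bS n m st q \<le> t \<and> t < bS n m st (Suc q)"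
    using least_char[OF t(1,2) ne assms(1)] unfolding q_def by blast
  have "arms st ! q = j" using t unfolding pP_def q_def by simp
  then have "q = p" using assms qc distinct_arms[of st] nth_eq_iff_index_eq by metis
  then show "t \<in> {bS n m st p ..< bS n m st (Suc p)}" using qc by simp
next
  have ne: "act st \<noteq> {}" using assms set_arms[of st] by (metis length_pos_if_in_set nth_mem less_zeroE list.size(3) empty_iff)
  fix t assume "t \<in> {bS n m st p ..< bS n m st (Suc p)}"
  then have t: "bS n m st p \<le> t" "t < bS n m st (Suc p)" by auto
  have s: "start st \<le> t" using bS_mono[of 0 p n m st] bS_0[of n m st] t by simp
  have e: "t < pe n m st" using bS_mono[of "Suc p" "length (arms st)" n m st] bS_len[of n m st] t assms(2) by simp
  define q where "q = (LEAST i. t < bS n m st (Suc i))"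
  have qc: "q < length (arms st) \<and> bS n m st q \<le> t \<and> t < bS n m st (Suc q)"
    using least_char[OF s e ne assms(1)] unfolding q_def by blast
  have "q \<le> p" unfolding q_def by (rule Least_le) (use t in simp)
  moreover have "\<not> q < p"
  proof
    assume "q < p"
    then have "bS n m st (Suc q) \<le> bS n m st p" by (intro bS_mono) simp
    then show False using qc t by simp
  qed
  ultimately have "q = p" by simp
  then show "t \<in> {t. start st \<le> t \<and> t < pe n m st \<and> pP n m st t = j}"
    using s e assms(3) unfolding pP_def q_def by simp
qed


definition inv :: "nat \<Rightarrow> odaaf_state \<Rightarrow> bool" where
  "inv K st \<longleftrightarrow> finite (act st) \<and> act st \<noteq> {} \<and> act st \<subseteq> {1..K} \<and> 1 \<le> start st \<and>
     (\<forall>t. 1 \<le> t \<and> t < start st \<longrightarrow> play st t \<in> {1..K}) \<and>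
     (\<forall>j t. t \<in> samp st j \<longrightarrow> 1 \<le> t \<and> t < start st \<and> play st t = j) \<and>
     (\<forall>j. finite (samp st j))"

lemma start_le_pe: "start st \<le> pe n m st"
  unfolding pe_def by simp

lemma pP_below: "t < start st \<Longrightarrow> pP n m st t = play st t"
  unfolding pP_def by simp

lemma pP2_below: "t < pe n m st \<Longrightarrow> pP2 n pick A m st t = pP n m st t"
  unfolding pP2_def by simp

lemma pA_sub: "pA n r dl m st \<subseteq> act st"
  unfolding pA_def by auto

lemma tol_nonneg: "0 \<le> tol m"
  unfolding tol_def by simp

lemma pA_ne: "finite (act st) \<Longrightarrow> act st \<noteq> {} \<Longrightarrow> pA n r dl m st \<noteq> {}"
proof -
  assume f: "finite (act st)" and ne: "act st \<noteq> {}"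
  have "Max (pX n r dl m st ` act st) \<in> pX n r dl m st ` act st"
    using f ne by (intro Max_in) auto
  then obtain j where j: "j \<in> act st" "pX n r dl m st j = Max (pX n r dl m st ` act st)" by auto
  then have "j \<in> pA n r dl m st" unfolding pA_def using tol_nonneg[of m] by auto
  then show ?thesis by auto
qed

lemma inv_phase:
  assumes inv: "inv K st" and pick: "\<And>m A. A \<noteq> {} \<Longrightarrow> pick m A \<in> A"
  shows "inv K (odaaf_phase n pick r dl m st)"
proof -
  have f: "finite (act st)" and ne: "act st \<noteq> {}" and sub: "act st \<subseteq> {1..K}" and s1: "1 \<le> start st"
    and pl: "\<And>t. 1 \<le> t \<Longrightarrow> t < start st \<Longrightarrow> play st t \<in> {1..K}"
    and sa: "\<And>j t. t \<in> samp st j \<Longrightarrow> 1 \<le> t \<and> t < start st \<and> play st t = j"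
    and fs: "\<And>j. finite (samp st j)"
    using inv unfolding inv_def by auto
  let ?A = "pA n r dl m st"
  have Ane: "?A \<noteq> {}" by (rule pA_ne[OF f ne])
  have Asub: "?A \<subseteq> act st" by (rule pA_sub)
  have pk: "pick m ?A \<in> {1..K}" using pick[OF Ane] Asub sub by blast
  have play': "pP2 n pick ?A m st t \<in> {1..K}" if "1 \<le> t" "t < pe n m st + pL n m" for t
  proof (cases "pe n m st \<le> t")
    case True then show ?thesis using pk that unfolding pP2_def by simp
  next
    case False
    then have "pP2 n pick ?A m st t = pP n m st t" by (simp add: pP2_def)
    moreover have "pP n m st t \<in> {1..K}"
    proof (cases "start st \<le> t")
      case True
      have "t < pe n m st" using False by simp
      then show ?thesis using pP_in_act[OF True _ ne f] sub by blast
    next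
      case False then show ?thesis using pl[OF that(1)] pP_below[of t st] by simp
    qed
    ultimately show ?thesis by simp
  qed
  have samp': "1 \<le> t \<and> t < pe n m st + pL n m \<and> pP2 n pick ?A m st t = j" if "t \<in> pS n m st j" for t j
  proof (cases "t \<in> samp st j")
    case True
    then have "1 \<le> t" "t < start st" "play st t = j" using sa by auto
    then show ?thesis using start_le_pe[of st n m] pP2_below[of t n m st] pP_below[of t st n m] by auto
  next
    case False
    then have "start st \<le> t" "t < pe n m st" "pP n m st t = j" using that unfolding pS_def by auto
    then show ?thesis using s1 pP2_below[of t n m st] by auto
  qed
  have fS: "finite (pS n m st j)" for j
    unfolding pS_def using fs[of j] by (auto intro: finite_subset[of _ "{..<pe n m st}"])
  show ?thesis unfolding phase_eq inv_def
    using Ane Asub f sub s1 start_le_pe[of st n m] play' samp' fS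
    by (auto intro: finite_subset)
qed

lemma run_Suc: "odaaf_run K n pick r dl (Suc k) = odaaf_phase n pick r dl (Suc k) (odaaf_run K n pick r dl k)"
  by simp

lemma inv_run:
  assumes "K \<ge> 1" "\<And>m A. A \<noteq> {} \<Longrightarrow> pick m A \<in> A"
  shows "inv K (odaaf_run K n pick r dl k)"
proof (induction k)
  case 0 then show ?case using assms(1) by (simp add: inv_def)
next
  case (Suc k) then show ?case using inv_phase[OF _ assms(2)] by simp
qed

lemma act_run_mono: "act (odaaf_run K n pick r dl (Suc k)) \<subseteq> act (odaaf_run K n pick r dl k)"
  by (simp add: phase_eq pA_sub)

lemma arm_index:
  assumes "finite (act st)" "j \<in> act st"
  obtains p where "p < length (arms st)" "arms st ! p = j"
  using assms set_arms[of st] by (metis in_set_conv_nth)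

lemma block_card:
  assumes "finite (act st)" "j \<in> act st"
  shows "card {t. start st \<le> t \<and> t < pe n m st \<and> pP n m st t = j} = n m - card (samp st j)"
proof -
  obtain p where p: "p < length (arms st)" "arms st ! p = j" using arm_index[OF assms] .
  show ?thesis unfolding block_eq[OF assms(1) p] using bS_Suc[OF p(1), of n m] p by simp
qed

lemma card_pS:
  assumes "inv K st" "j \<in> act st"
  shows "card (pS n m st j) = card (samp st j) + (n m - card (samp st j))"
proof -
  have f: "finite (act st)" and sa: "\<And>t. t \<in> samp st j \<Longrightarrow> t < start st" and fs: "finite (samp st j)"
    using assms unfolding inv_def by auto
  have "card (pS n m st j) = card (samp st j) + card {t. start st \<le> t \<and> t < pe n m st \<and> pP n m st t = j}"
    unfolding pS_def
    by (rule card_Un_disjoint) (use fs sa in \<open>force intro: finite_subset[of _ "{..<pe n m st}"]\<close>)+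
  then show ?thesis using block_card[OF f assms(2)] by simp
qed

lemma card_samp_run:
  assumes "K \<ge> 1" "\<And>m A. A \<noteq> {} \<Longrightarrow> pick m A \<in> A" "n 0 = 0" "mono n"
  shows "j \<in> act (odaaf_run K n pick r dl k) \<Longrightarrow> card (samp (odaaf_run K n pick r dl k) j) = n k"
proof (induction k)
  case 0 then show ?case using assms(3) by simp
next
  case (Suc k)
  have j: "j \<in> act (odaaf_run K n pick r dl k)" using Suc.prems act_run_mono by blast
  have "n k \<le> n (Suc k)" using assms(4) by (simp add: monoD)
  then show ?case using card_pS[OF inv_run[OF assms(1,2)] j, of n "Suc k"] Suc.IH[OF j]
    by (simp add: phase_eq)
qed

lemma obs_cong_P: "(\<And>l. 1 \<le> l \<Longrightarrow> l \<le> t \<Longrightarrow> P l = P' l) \<Longrightarrow> obs r dl P t = obs r dl P' t"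
  unfolding obs_def by (intro sum.cong) auto

lemma obs_cong_data: "(\<And>l. 1 \<le> l \<Longrightarrow> l \<le> t \<Longrightarrow> r l (P l) = r' l (P l) \<and> dl l (P l) = dl' l (P l))
   \<Longrightarrow> obs r dl P t = obs r' dl' P t"
  unfolding obs_def by (intro sum.cong) auto

lemma sum_obs_swap:
  "(\<Sum>t\<in>{a..<b}. obs r dl P t) = (\<Sum>l\<in>{1..<b}. r l (P l) * (if a \<le> l + dl l (P l) \<and> l + dl l (P l) < b then 1 else 0))"
proof -
  have "(\<Sum>t\<in>{a..<b}. obs r dl P t) = (\<Sum>t\<in>{a..<b}. \<Sum>l\<in>{1..<b}. (if t = l + dl l (P l) then r l (P l) else 0))"
  proof (intro sum.cong refl)
    fix t assume t: "t \<in> {a..<b}"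
    have "obs r dl P t = (\<Sum>l\<in>{1..<b}. if l \<le> t then r l (P l) * (if l + dl l (P l) = t then 1 else 0) else 0)"
      unfolding obs_def using t by (intro sum.mono_neutral_cong_left) auto
    also have "\<dots> = (\<Sum>l\<in>{1..<b}. (if t = l + dl l (P l) then r l (P l) else 0))"
      by (intro sum.cong) auto
    finally show "obs r dl P t = \<dots>" .
  qed
  also have "\<dots> = (\<Sum>l\<in>{1..<b}. \<Sum>t\<in>{a..<b}. (if t = l + dl l (P l) then r l (P l) else 0))"
    by (rule sum.swap)
  also have "\<dots> = (\<Sum>l\<in>{1..<b}. r l (P l) * (if a \<le> l + dl l (P l) \<and> l + dl l (P l) < b then 1 else 0))"
    by (intro sum.cong refl) (simp add: sum.delta')
  finally show ?thesis .
qed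

lemma card_window: "card ({x..<y} \<inter> {l. y \<le> l + d}) \<le> (d::nat)"
proof -
  have "{x..<y} \<inter> {l. y \<le> l + d} \<subseteq> {y - d..<y}" by auto
  then have "card ({x..<y} \<inter> {l. y \<le> l + d}) \<le> card {y - d..<y}" by (intro card_mono) auto
  then show ?thesis by simp
qed

lemma sum_window:
  assumes "\<And>l. l \<in> {x..<y} \<Longrightarrow> 0 \<le> f l \<and> f l \<le> (1::real) \<and> (c l \<longrightarrow> y \<le> l + d)"
  shows "0 \<le> (\<Sum>l\<in>{x..<y}. f l * (if c l then 1 else 0)) \<and> (\<Sum>l\<in>{x..<y}. f l * (if c l then 1 else 0)) \<le> real d"
proof
  show "0 \<le> (\<Sum>l\<in>{x..<y}. f l * (if c l then 1 else 0))" using assms by (intro sum_nonneg) auto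
  have "(\<Sum>l\<in>{x..<y}. f l * (if c l then 1 else 0)) \<le> (\<Sum>l\<in>{x..<y}. (if y \<le> l + d then 1 else 0))"
    using assms by (intro sum_mono) auto
  also have "\<dots> = real (card ({x..<y} \<inter> {l. y \<le> l + d}))"
    by (simp add: sum.If_cases)
  also have "\<dots> \<le> real d" using card_window by simp
  finally show "(\<Sum>l\<in>{x..<y}. f l * (if c l then 1 else 0)) \<le> real d" .
qed

lemma obs_block:
  assumes data: "\<And>l. 1 \<le> l \<Longrightarrow> l < b \<Longrightarrow> 0 \<le> r l (P l) \<and> r l (P l) \<le> 1 \<and> dl l (P l) \<le> d"
    and Pj: "\<And>l. l \<in> {a..<b} \<Longrightarrow> P l = j" and a1: "1 \<le> a"
  shows "\<bar>(\<Sum>t\<in>{a..<b}. obs r dl P t) - (\<Sum>t\<in>{a..<b}. r t j)\<bar> \<le> real d"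
proof (cases "a \<le> b")
  case False then show ?thesis by simp
next
  case True
  define f where "f l = r l (P l)" for l
  define g where "g l = (if a \<le> l + dl l (P l) \<and> l + dl l (P l) < b then 1 else (0::real))" for l
  have split: "{1..<b} = {1..<a} \<union> {a..<b}" using True a1 by auto
  have "(\<Sum>t\<in>{a..<b}. obs r dl P t) = (\<Sum>l\<in>{1..<a}. f l * g l) + (\<Sum>l\<in>{a..<b}. f l * g l)"
    unfolding sum_obs_swap f_def g_def split by (rule sum.union_disjoint) auto
  moreover have "(\<Sum>t\<in>{a..<b}. r t j) = (\<Sum>l\<in>{a..<b}. f l)"
    unfolding f_def using Pj by (intro sum.cong) auto
  moreover have "(\<Sum>l\<in>{a..<b}. f l) - (\<Sum>l\<in>{a..<b}. f l * g l) = (\<Sum>l\<in>{a..<b}. f l * (if b \<le> l + dl l (P l) then 1 else 0))"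
    unfolding sum_subtractf[symmetric] g_def by (intro sum.cong) auto
  moreover have A: "0 \<le> (\<Sum>l\<in>{1..<a}. f l * g l) \<and> (\<Sum>l\<in>{1..<a}. f l * g l) \<le> real d"
    unfolding g_def by (rule sum_window) (use data True in \<open>force simp: f_def\<close>)
  moreover have B: "0 \<le> (\<Sum>l\<in>{a..<b}. f l * (if b \<le> l + dl l (P l) then 1 else 0)) \<and> (\<Sum>l\<in>{a..<b}. f l * (if b \<le> l + dl l (P l) then 1 else 0)) \<le> real d"
  proof (rule sum_window)
    fix l assume l: "l \<in> {a..<b}"
    then have "1 \<le> l" "l < b" using a1 by auto
    from data[OF this] show "0 \<le> f l \<and> f l \<le> 1 \<and> (b \<le> l + dl l (P l) \<longrightarrow> b \<le> l + d)"
      unfolding f_def by auto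
  qed
  ultimately show ?thesis by linarith
qed


definition good :: "nat \<Rightarrow> nat \<Rightarrow> (nat \<Rightarrow> nat \<Rightarrow> real) \<Rightarrow> (nat \<Rightarrow> nat \<Rightarrow> nat) \<Rightarrow> bool" where
  "good K d r dl \<longleftrightarrow> (\<forall>l i. 1 \<le> l \<longrightarrow> i \<in> {1..K} \<longrightarrow> 0 \<le> r l i \<and> r l i \<le> 1 \<and> dl l i \<le> d)"

definition bias :: "(nat \<Rightarrow> nat \<Rightarrow> real) \<Rightarrow> (nat \<Rightarrow> nat \<Rightarrow> nat) \<Rightarrow> odaaf_state \<Rightarrow> nat \<Rightarrow> real" where
  "bias r dl st j = (\<Sum>t\<in>samp st j. obs r dl (play st) t - r t j)"

lemma pP_range:
  assumes "inv K st" "1 \<le> l" "l < pe n m st"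
  shows "pP n m st l \<in> {1..K}"
proof (cases "start st \<le> l")
  case True
  then show ?thesis using pP_in_act[OF True assms(3)] assms(1) unfolding inv_def by blast
next
  case False
  then show ?thesis using assms(1,2) pP_below[of l st n m] unfolding inv_def by auto
qed

lemma bias_step:
  assumes inv: "inv K st" and gd: "good K d r dl" and j: "j \<in> act st"
  shows "\<bar>bias r dl (odaaf_phase n pick r dl m st) j\<bar> \<le> \<bar>bias r dl st j\<bar> + real d"
    and "xbar (odaaf_phase n pick r dl m st) j =
          (\<Sum>t\<in>samp (odaaf_phase n pick r dl m st) j. obs r dl (play (odaaf_phase n pick r dl m st)) t)
            / real (card (samp (odaaf_phase n pick r dl m st) j))"
proof -
  have f: "finite (act st)" and s1: "1 \<le> start st"
    and sa: "\<And>t. t \<in> samp st j \<Longrightarrow> 1 \<le> t \<and> t < start st \<and> play st t = j"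
    and fs: "finite (samp st j)"
    using inv unfolding inv_def by auto
  obtain p where p: "p < length (arms st)" "arms st ! p = j" using arm_index[OF f j] .
  define a where "a = bS n m st p"
  define b where "b = bS n m st (Suc p)"
  have blk: "{t. start st \<le> t \<and> t < pe n m st \<and> pP n m st t = j} = {a..<b}"
    unfolding a_def b_def by (rule block_eq[OF f p])
  have sa': "start st \<le> a" unfolding a_def using bS_mono[of 0 p n m st] bS_0[of n m st] by simp
  have be: "b \<le> pe n m st" unfolding b_def using bS_mono[of "Suc p" "length (arms st)" n m st] bS_len[of n m st] p(1) by simp
  let ?P2 = "pP2 n pick (pA n r dl m st) m st"
  have sampeq: "samp (odaaf_phase n pick r dl m st) j = samp st j \<union> {a..<b}"
    by (simp add: phase_eq pS_def blk)
  have disj: "samp st j \<inter> {a..<b} = {}" using sa sa' by force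
  have obs_old: "obs r dl ?P2 t = obs r dl (play st) t" if "t \<in> samp st j" for t
    using sa[OF that] start_le_pe[of st n m]
    by (intro obs_cong_P) (simp add: pP2_below pP_below)
  have obs_new: "obs r dl ?P2 t = obs r dl (pP n m st) t" if "t < pe n m st" for t
    using that by (intro obs_cong_P) (simp add: pP2_below)
  have blkP: "pP n m st l = j" if "l \<in> {a..<b}" for l using blk that by blast
  have datab: "0 \<le> r l (pP n m st l) \<and> r l (pP n m st l) \<le> 1 \<and> dl l (pP n m st l) \<le> d"
    if "1 \<le> l" "l < b" for l
    using pP_range[OF inv that(1), of n m] that be gd unfolding good_def by auto
  have ob: "\<bar>(\<Sum>t\<in>{a..<b}. obs r dl (pP n m st) t) - (\<Sum>t\<in>{a..<b}. r t j)\<bar> \<le> real d"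
    by (rule obs_block[where P="pP n m st" and j=j and r=r and dl=dl and d=d and a=a and b=b, OF datab blkP]) (use sa' s1 in auto)
  have "bias r dl (odaaf_phase n pick r dl m st) j =
        (\<Sum>t\<in>samp st j. obs r dl ?P2 t - r t j) + (\<Sum>t\<in>{a..<b}. obs r dl ?P2 t - r t j)"
    unfolding bias_def sampeq by (simp add: phase_eq sum.union_disjoint[OF fs _ disj])
  also have "\<dots> = bias r dl st j + ((\<Sum>t\<in>{a..<b}. obs r dl (pP n m st) t) - (\<Sum>t\<in>{a..<b}. r t j))"
    unfolding bias_def sum_subtractf[symmetric] using obs_old obs_new be by (intro arg_cong2[where f="(+)"] sum.cong) auto
  finally show "\<bar>bias r dl (odaaf_phase n pick r dl m st) j\<bar> \<le> \<bar>bias r dl st j\<bar> + real d"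
    using ob by linarith
  have "\<forall>t\<in>pS n m st j. t < pe n m st" using sa start_le_pe[of st n m] unfolding pS_def by force
  then show "xbar (odaaf_phase n pick r dl m st) j =
          (\<Sum>t\<in>samp (odaaf_phase n pick r dl m st) j. obs r dl (play (odaaf_phase n pick r dl m st)) t)
            / real (card (samp (odaaf_phase n pick r dl m st) j))"
    by (simp add: phase_eq pX_def obs_new)
qed

lemma bias_run:
  assumes "K \<ge> 1" "\<And>m A. A \<noteq> {} \<Longrightarrow> pick m A \<in> A" "good K d r dl"
  shows "j \<in> act (odaaf_run K n pick r dl k) \<Longrightarrow> \<bar>bias r dl (odaaf_run K n pick r dl k) j\<bar> \<le> real k * real d"
proof (induction k)
  case 0 then show ?case by (simp add: bias_def)
next
  case (Suc k)
  have j: "j \<in> act (odaaf_run K n pick r dl k)" using Suc.prems act_run_mono by blast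
  show ?case using bias_step(1)[OF inv_run[OF assms(1,2)] assms(3) j, where n=n and m="Suc k" and pick=pick] Suc.IH[OF j]
    by (simp add: algebra_simps)
qed

lemma det_main:
  assumes K: "K \<ge> 1" and pick: "\<And>m A. A \<noteq> {} \<Longrightarrow> pick m A \<in> A" and gd: "good K d r dl"
    and n0: "n 0 = 0" and mono: "mono n" and m: "1 \<le> m" and npos: "0 < n m"
    and j: "j \<in> act (odaaf_run K n pick r dl (m - 1))"
  shows "\<bar>xbar (odaaf_run K n pick r dl m) j - c\<bar> \<le>
     \<bar>\<Sum>t\<in>samp (odaaf_run K n pick r dl m) j. r t j - c\<bar> / real (n m) + real m * real d / real (n m)"
proof -
  obtain k where k: "m = Suc k" using m by (cases m) auto
  let ?st = "odaaf_run K n pick r dl k"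
  let ?st' = "odaaf_run K n pick r dl m"
  have jk: "j \<in> act ?st" using j k by simp
  have inv: "inv K ?st" by (rule inv_run[OF K pick])
  have st': "?st' = odaaf_phase n pick r dl m ?st" using k by simp
  have b: "\<bar>bias r dl ?st' j\<bar> \<le> real m * real d"
    using bias_step(1)[OF inv gd jk, where n=n and m=m and pick=pick] bias_run[OF K pick gd jk] st' k by (simp add: algebra_simps)
  have card: "card (samp ?st' j) = n m"
    using card_pS[OF inv jk, of n m] card_samp_run[OF K pick n0 mono jk] mono k st'
    by (simp add: phase_eq monoD)
  have xb: "xbar ?st' j = (\<Sum>t\<in>samp ?st' j. obs r dl (play ?st') t) / real (n m)"
    using bias_step(2)[OF inv gd jk, where n=n and m=m and pick=pick] st' card by simp
  have "xbar ?st' j - c = (bias r dl ?st' j + (\<Sum>t\<in>samp ?st' j. r t j - c)) / real (n m)"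
    unfolding xb bias_def sum_subtractf using card npos by (simp add: field_simps)
  then have "\<bar>xbar ?st' j - c\<bar> \<le> (\<bar>bias r dl ?st' j\<bar> + \<bar>\<Sum>t\<in>samp ?st' j. r t j - c\<bar>) / real (n m)"
    using npos by (simp add: abs_triangle_ineq divide_right_mono)
  also have "\<dots> \<le> (real m * real d + \<bar>\<Sum>t\<in>samp ?st' j. r t j - c\<bar>) / real (n m)"
    using b npos by (intro divide_right_mono) auto
  finally show ?thesis by (simp add: add_divide_distrib)
qed

definition agree :: "nat \<Rightarrow> nat \<Rightarrow> (nat \<Rightarrow> nat \<Rightarrow> real) \<Rightarrow> (nat \<Rightarrow> nat \<Rightarrow> nat) \<Rightarrow> (nat \<Rightarrow> nat \<Rightarrow> real) \<Rightarrow> (nat \<Rightarrow> nat \<Rightarrow> nat) \<Rightarrow> bool" where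
  "agree K s r dl r' dl' \<longleftrightarrow> (\<forall>l i. 1 \<le> l \<longrightarrow> l < s \<longrightarrow> i \<in> {1..K} \<longrightarrow> r l i = r' l i \<and> dl l i = dl' l i)"

lemma agree_mono: "agree K s r dl r' dl' \<Longrightarrow> s' \<le> s \<Longrightarrow> agree K s' r dl r' dl'"
  unfolding agree_def by auto

lemma pS_lt: "inv K st \<Longrightarrow> t \<in> pS n m st j \<Longrightarrow> t < pe n m st"
  unfolding inv_def pS_def using start_le_pe[of st n m] by force

lemma start_phase: "start st \<le> start (odaaf_phase n pick r dl m st)"
  using start_le_pe[of st n m] by (simp add: phase_eq)

lemma pX_agree:
  assumes inv: "inv K st" and ag: "agree K (pe n m st) r dl r' dl'"
  shows "pX n r dl m st = pX n r' dl' m st"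
proof
  fix j
  have "obs r dl (pP n m st) t = obs r' dl' (pP n m st) t" if "t \<in> pS n m st j" for t
  proof (rule obs_cong_data)
    fix l assume l: "1 \<le> l" "l \<le> t"
    have lt: "l < pe n m st" using pS_lt[OF inv that] l by simp
    have "pP n m st l \<in> {1..K}" by (rule pP_range[OF inv l(1) lt])
    then show "r l (pP n m st l) = r' l (pP n m st l) \<and> dl l (pP n m st l) = dl' l (pP n m st l)"
      using ag l lt unfolding agree_def by blast
  qed
  then show "pX n r dl m st j = pX n r' dl' m st j"
    unfolding pX_def by (simp cong: sum.cong)
qed

lemma phase_agree:
  assumes inv: "inv K st" and ag: "agree K (pe n m st) r dl r' dl'"
  shows "odaaf_phase n pick r' dl' m st = odaaf_phase n pick r dl m st"
proof -
  have "pX n r dl m st = pX n r' dl' m st" by (rule pX_agree[OF inv ag])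
  then have "pA n r dl m st = pA n r' dl' m st" unfolding pA_def by simp
  then show ?thesis using \<open>pX n r dl m st = pX n r' dl' m st\<close> by (simp add: phase_eq)
qed

lemma loc_run:
  assumes K: "K \<ge> 1" and pick: "\<And>m A. A \<noteq> {} \<Longrightarrow> pick m A \<in> A"
  shows "agree K (start (odaaf_run K n pick r dl k)) r dl r' dl' \<Longrightarrow>
         odaaf_run K n pick r' dl' k = odaaf_run K n pick r dl k"
proof (induction k)
  case 0 then show ?case by simp
next
  case (Suc k)
  let ?st = "odaaf_run K n pick r dl k"
  have ag: "agree K (start ?st) r dl r' dl'"
    using Suc.prems start_phase[of ?st n pick r dl "Suc k"] by (auto intro: agree_mono)
  have eq: "odaaf_run K n pick r' dl' k = ?st" by (rule Suc.IH[OF ag])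
  have ag2: "agree K (pe n (Suc k) ?st) r dl r' dl'"
    using Suc.prems by (auto intro: agree_mono simp: phase_eq)
  show ?case using phase_agree[OF inv_run[OF K pick] ag2, of pick] eq by simp
qed

lemma measurable_by_pieces:
  assumes V: "countable V" "\<And>x. x \<in> space N \<Longrightarrow> D x \<in> V"
    and pre: "\<And>v. v \<in> V \<Longrightarrow> {x \<in> space N. D x = v} \<in> sets N"
    and g: "\<And>v. v \<in> V \<Longrightarrow> g v \<in> measurable N Mo"
  shows "(\<lambda>x. g (D x) x) \<in> measurable N Mo"
proof (rule measurableI)
  fix x assume x: "x \<in> space N" then show "g (D x) x \<in> space Mo"
    by (rule measurable_space[OF g[OF V(2)[OF x]]])
next
  fix A assume A: "A \<in> sets Mo"
  have "(\<lambda>x. g (D x) x) -` A \<inter> space N = (\<Union>v\<in>V. {x \<in> space N. D x = v} \<inter> (g v -` A \<inter> space N))"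
  proof (intro set_eqI iffI)
    fix x assume "x \<in> (\<lambda>x. g (D x) x) -` A \<inter> space N"
    then show "x \<in> (\<Union>v\<in>V. {x \<in> space N. D x = v} \<inter> (g v -` A \<inter> space N))"
      using V(2) by blast
  qed blast
  also have "\<dots> \<in> sets N"
  proof (rule sets.countable_UN''[OF V(1)])
    fix v assume v: "v \<in> V"
    show "{x \<in> space N. D x = v} \<inter> (g v -` A \<inter> space N) \<in> sets N"
      by (rule sets.Int[OF pre[OF v] measurable_sets[OF g[OF v] A]])
  qed
  finally show "(\<lambda>x. g (D x) x) -` A \<inter> space N \<in> sets N" .
qed

definition dsc :: "odaaf_state \<Rightarrow> odaaf_state" where
  "dsc st = st\<lparr>xbar := (\<lambda>_. 0)\<rparr>"

lemma phase_dsc: "odaaf_phase n pick r dl m (dsc st) = odaaf_phase n pick r dl m st"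
  unfolding odaaf_phase_def dsc_def Let_def by (simp cong: if_cong)

lemma dsc_simps[simp]: "act (dsc st) = act st" "start (dsc st) = start st" "samp (dsc st) = samp st"
  "play (dsc st) = play st" "xbar (dsc st) = (\<lambda>_. 0)"
  by (simp_all add: dsc_def)

lemma inv_dsc[simp]: "inv K (dsc st) = inv K st"
  by (simp add: inv_def)

lemma pe_dsc[simp]: "pe n m (dsc st) = pe n m st" and pS_dsc[simp]: "pS n m (dsc st) = pS n m st"
  and pP_dsc[simp]: "pP n m (dsc st) = pP n m st" and bS_dsc[simp]: "bS n m (dsc st) = bS n m st"
  unfolding pe_def pS_def pP_def bS_def lens_def arms_def by (simp_all cong: if_cong)

definition newd :: "(nat\<Rightarrow>nat) \<Rightarrow> (nat \<Rightarrow> nat set \<Rightarrow> nat) \<Rightarrow> nat \<Rightarrow> odaaf_state \<Rightarrow> nat set \<Rightarrow> odaaf_state" where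
  "newd n pick m v A = \<lparr>act = A, start = pe n m v + pL n m, samp = pS n m v, play = pP2 n pick A m v, xbar = (\<lambda>_. 0)\<rparr>"

lemma pX_dsc[simp]: "pX n r dl m (dsc st) = pX n r dl m st"
  unfolding pX_def by simp

lemma pA_dsc[simp]: "pA n r dl m (dsc st) = pA n r dl m st"
  unfolding pA_def by simp

lemma pP2_dsc[simp]: "pP2 n pick A m (dsc st) = pP2 n pick A m st"
  unfolding pP2_def by (simp cong: if_cong)

lemma newd_dsc[simp]: "newd n pick m (dsc st) A = newd n pick m st A"
  unfolding newd_def by simp

lemma dsc_phase: "dsc (odaaf_phase n pick r dl m st) = newd n pick m st (pA n r dl m st)"
  by (simp add: phase_eq newd_def dsc_def)

locale gen =
  fixes N :: "'b measure" and K :: nat and n :: "nat \<Rightarrow> nat" and pick :: "nat \<Rightarrow> nat set \<Rightarrow> nat"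
    and r :: "nat \<Rightarrow> nat \<Rightarrow> 'b \<Rightarrow> real" and dl :: "nat \<Rightarrow> nat \<Rightarrow> 'b \<Rightarrow> nat"
  assumes r_meas[measurable]: "\<And>l i. r l i \<in> borel_measurable N"
    and dl_meas[measurable]: "\<And>l i. dl l i \<in> measurable N (count_space UNIV)"
    and K1: "K \<ge> 1" and pick: "\<And>m A. A \<noteq> {} \<Longrightarrow> pick m A \<in> A"
begin

abbreviation RUN :: "nat \<Rightarrow> 'b \<Rightarrow> odaaf_state" where
  "RUN k x \<equiv> odaaf_run K n pick (\<lambda>l i. r l i x) (\<lambda>l i. dl l i x) k"

lemma obs_meas: "(\<lambda>x. obs (\<lambda>l i. r l i x) (\<lambda>l i. dl l i x) P t) \<in> borel_measurable N"
  unfolding obs_def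
proof (intro borel_measurable_sum borel_measurable_times)
  fix l
  show "(\<lambda>x. r l (P l) x) \<in> borel_measurable N" by simp
  have m: "(\<lambda>x. l + dl l (P l) x) \<in> measurable N (count_space UNIV)"
    using measurable_compose[OF dl_meas[of l "P l"], of "\<lambda>y. l + y" "count_space UNIV"] by simp
  have "(\<lambda>x. l + dl l (P l) x) -` {t} \<inter> space N \<in> sets N"
    by (rule measurable_sets[OF m]) simp
  moreover have "(\<lambda>x. l + dl l (P l) x) -` {t} \<inter> space N = {x \<in> space N. l + dl l (P l) x = t}" by auto
  ultimately have "{x \<in> space N. l + dl l (P l) x = t} \<in> sets N" by simp
  then show "(\<lambda>x. if l + dl l (P l) x = t then 1 else 0::real) \<in> borel_measurable N"
    by (rule measurable_If[OF borel_measurable_const borel_measurable_const])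
qed

lemma pX_meas: "(\<lambda>x. pX n (\<lambda>l i. r l i x) (\<lambda>l i. dl l i x) m v j) \<in> borel_measurable N"
  unfolding pX_def by (intro borel_measurable_divide borel_measurable_sum obs_meas borel_measurable_const)


lemma RUN_Suc: "RUN (Suc k) x = odaaf_phase n pick (\<lambda>l i. r l i x) (\<lambda>l i. dl l i x) (Suc k) (dsc (RUN k x))"
  by (simp add: phase_dsc)

lemma dsc_RUN_Suc: "dsc (RUN (Suc k) x) = newd n pick (Suc k) (dsc (RUN k x)) (pA n (\<lambda>l i. r l i x) (\<lambda>l i. dl l i x) (Suc k) (dsc (RUN k x)))"
  by (simp add: dsc_phase)

lemma pA_meas:
  assumes f: "finite (act v)"
  shows "{x \<in> space N. pA n (\<lambda>l i. r l i x) (\<lambda>l i. dl l i x) m v = A} \<in> sets N"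
proof -
  define F where "F j x = pX n (\<lambda>l i. r l i x) (\<lambda>l i. dl l i x) m v j" for j x
  have Fm[measurable]: "F j \<in> borel_measurable N" for j unfolding F_def by (rule pX_meas)
  have "{x \<in> space N. pA n (\<lambda>l i. r l i x) (\<lambda>l i. dl l i x) m v = A} =
        {x \<in> space N. A \<subseteq> act v \<and> (\<forall>j\<in>act v. (j \<in> A \<longleftrightarrow> Max ((\<lambda>i. F i x) ` act v) \<le> F j x + tol m))}"
    unfolding pA_def F_def by (intro Collect_cong conj_cong refl) (auto simp: image_def)
  also have "\<dots> \<in> sets N" using f by measurable
  finally show ?thesis .
qed

definition VV :: "nat \<Rightarrow> odaaf_state set" where
  "VV k = (\<lambda>x. dsc (RUN k x)) ` space N"

lemma VV_props: "countable (VV k) \<and> (\<forall>v\<in>VV k. {x \<in> space N. dsc (RUN k x) = v} \<in> sets N) \<and> (\<forall>v\<in>VV k. inv K v)"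
proof (induction k)
  case 0
  have "VV 0 \<subseteq> {dsc (RUN 0 undefined)}" unfolding VV_def by (auto simp: dsc_def)
  then have c: "countable (VV 0)" by (rule countable_subset) simp
  have "{x \<in> space N. dsc (RUN 0 x) = v} \<in> sets N" for v
  proof -
    have "{x \<in> space N. dsc (RUN 0 x) = v} = (if dsc (RUN 0 undefined) = v then space N else {})"
      by (auto simp: dsc_def)
    then show ?thesis by simp
  qed
  moreover have "inv K v" if "v \<in> VV 0" for v
    using that K1 unfolding VV_def by (auto simp: inv_def dsc_def)
  ultimately show ?case using c by blast
next
  case (Suc k)
  have IH: "countable (VV k)" "\<And>v. v \<in> VV k \<Longrightarrow> {x \<in> space N. dsc (RUN k x) = v} \<in> sets N"
    "\<And>v. v \<in> VV k \<Longrightarrow> inv K v" using Suc.IH by blast+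
  have fin: "finite (act v)" if "v \<in> VV k" for v using IH(3)[OF that] unfolding inv_def by simp
  let ?pA = "\<lambda>x v. pA n (\<lambda>l i. r l i x) (\<lambda>l i. dl l i x) (Suc k) v"
  have sub: "VV (Suc k) \<subseteq> (\<lambda>(v, A). newd n pick (Suc k) v A) ` (SIGMA v:VV k. Pow (act v))"
  proof
    fix w assume "w \<in> VV (Suc k)"
    then obtain x where x: "x \<in> space N" "w = dsc (RUN (Suc k) x)" unfolding VV_def by auto
    have "dsc (RUN k x) \<in> VV k" using x unfolding VV_def by auto
    moreover have "?pA x (dsc (RUN k x)) \<in> Pow (act (dsc (RUN k x)))" using pA_sub by blast
    ultimately show "w \<in> (\<lambda>(v, A). newd n pick (Suc k) v A) ` (SIGMA v:VV k. Pow (act v))"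
      unfolding x(2) dsc_RUN_Suc by (intro image_eqI[where x="(dsc (RUN k x), ?pA x (dsc (RUN k x)))"]) auto
  qed
  have c: "countable (VV (Suc k))"
    apply (rule countable_subset[OF sub])
    apply (rule countable_image)
    apply (rule countable_SIGMA[OF IH(1)])
    using fin by (simp add: countable_finite)
  have pre: "{x \<in> space N. dsc (RUN (Suc k) x) = w} \<in> sets N" for w
  proof -
    have "{x \<in> space N. dsc (RUN (Suc k) x) = w} =
       (\<Union>v\<in>VV k. \<Union>A\<in>Pow (act v). if newd n pick (Suc k) v A = w then
          {x \<in> space N. dsc (RUN k x) = v} \<inter> {x \<in> space N. ?pA x v = A} else {})"
    proof (intro set_eqI iffI)
      fix x assume x: "x \<in> {x \<in> space N. dsc (RUN (Suc k) x) = w}"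
      let ?v = "dsc (RUN k x)"
      have v: "?v \<in> VV k" using x unfolding VV_def by auto
      have A: "?pA x ?v \<in> Pow (act ?v)" using pA_sub by blast
      have "newd n pick (Suc k) ?v (?pA x ?v) = w" using x dsc_RUN_Suc[where k=k and x=x] by simp
      then show "x \<in> (\<Union>v\<in>VV k. \<Union>A\<in>Pow (act v). if newd n pick (Suc k) v A = w then
          {x \<in> space N. dsc (RUN k x) = v} \<inter> {x \<in> space N. ?pA x v = A} else {})"
        using x v A by (intro UN_I[OF v] UN_I[OF A]) simp
    next
      fix x assume "x \<in> (\<Union>v\<in>VV k. \<Union>A\<in>Pow (act v). if newd n pick (Suc k) v A = w then
          {x \<in> space N. dsc (RUN k x) = v} \<inter> {x \<in> space N. ?pA x v = A} else {})"
      then obtain v A where "v \<in> VV k" "newd n pick (Suc k) v A = w" "x \<in> space N" "dsc (RUN k x) = v" "?pA x v = A"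
        by (auto split: if_splits)
      then show "x \<in> {x \<in> space N. dsc (RUN (Suc k) x) = w}" using dsc_RUN_Suc[where k=k and x=x] by simp
    qed
    also have "\<dots> \<in> sets N"
    proof (rule sets.countable_UN''[OF IH(1)])
      fix v assume v: "v \<in> VV k"
      show "(\<Union>A\<in>Pow (act v). if newd n pick (Suc k) v A = w then
          {x \<in> space N. dsc (RUN k x) = v} \<inter> {x \<in> space N. ?pA x v = A} else {}) \<in> sets N"
      proof (rule sets.finite_UN)
        show "finite (Pow (act v))" using fin[OF v] by simp
        fix A assume "A \<in> Pow (act v)"
        show "(if newd n pick (Suc k) v A = w then
          {x \<in> space N. dsc (RUN k x) = v} \<inter> {x \<in> space N. ?pA x v = A} else {}) \<in> sets N"
          using sets.Int[OF IH(2)[OF v] pA_meas[OF fin[OF v]]] by simp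
      qed
    qed
    finally show ?thesis .
  qed
  have "inv K v" if vin: "v \<in> VV (Suc k)" for v
  proof -
    obtain x where x: "v = dsc (RUN (Suc k) x)" using vin unfolding VV_def image_iff by blast
    have "inv K (RUN (Suc k) x)" by (rule inv_run[OF K1 pick])
    then show ?thesis using x by simp
  qed
  then show ?case using c pre by blast
qed

lemma meas_state:
  assumes "\<And>v. v \<in> VV k \<Longrightarrow> g v \<in> measurable N Mo"
  shows "(\<lambda>x. g (dsc (RUN k x)) x) \<in> measurable N Mo"
proof (rule measurable_by_pieces[where V="VV k"])
  show "countable (VV k)" using VV_props by blast
  show "\<And>x. x \<in> space N \<Longrightarrow> dsc (RUN k x) \<in> VV k" unfolding VV_def by blast
  show "\<And>v. v \<in> VV k \<Longrightarrow> {x \<in> space N. dsc (RUN k x) = v} \<in> sets N" using VV_props by blast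
qed (rule assms)

end

lemma (in prob_space) indep_var_nn_integral_mult:
  fixes f :: "'s \<Rightarrow> ennreal" and g :: "'s \<Rightarrow> ennreal" and S :: "'s measure" and T :: "'s measure"
  assumes ind: "indep_var S X T Y" and f: "f \<in> borel_measurable S" and g: "g \<in> borel_measurable T"
  shows "(\<integral>\<^sup>+\<omega>. f (X \<omega>) * g (Y \<omega>) \<partial>M) = (\<integral>\<^sup>+\<omega>. f (X \<omega>) \<partial>M) * (\<integral>\<^sup>+\<omega>. g (Y \<omega>) \<partial>M)"
proof -
  have rvX: "X \<in> measurable M S" and rvY: "Y \<in> measurable M T"
    using ind by (blast dest: indep_var_rv1 indep_var_rv2)+
  have XY: "(\<lambda>x. (X x, Y x)) \<in> measurable M (S \<Otimes>\<^sub>M T)" using rvX rvY by (rule measurable_Pair)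
  interpret SX: prob_space "distr M S X" by (rule prob_space_distr[OF rvX])
  interpret TY: prob_space "distr M T Y" by (rule prob_space_distr[OF rvY])
  interpret P: pair_prob_space "distr M S X" "distr M T Y" ..
  have eq: "distr M S X \<Otimes>\<^sub>M distr M T Y = distr M (S \<Otimes>\<^sub>M T) (\<lambda>x. (X x, Y x))"
    using ind indep_var_distribution_eq by blast
  have fg: "(\<lambda>p. f (fst p) * g (snd p)) \<in> borel_measurable (S \<Otimes>\<^sub>M T)"
    using f g by measurable
  have "(\<integral>\<^sup>+\<omega>. f (X \<omega>) * g (Y \<omega>) \<partial>M) = (\<integral>\<^sup>+p. f (fst p) * g (snd p) \<partial>distr M (S \<Otimes>\<^sub>M T) (\<lambda>x. (X x, Y x)))"
    using nn_integral_distr[OF XY, of "\<lambda>p. f (fst p) * g (snd p)"] fg by simp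
  also have "\<dots> = (\<integral>\<^sup>+p. f (fst p) * g (snd p) \<partial>(distr M S X \<Otimes>\<^sub>M distr M T Y))"
    unfolding eq ..
  also have "\<dots> = (\<integral>\<^sup>+x. (\<integral>\<^sup>+y. f x * g y \<partial>distr M T Y) \<partial>distr M S X)"
  proof -
    have m: "(\<lambda>p. f (fst p) * g (snd p)) \<in> borel_measurable (distr M S X \<Otimes>\<^sub>M distr M T Y)"
      using fg by (simp add: measurable_cong_sets[OF sets_pair_measure_cong[OF sets_distr sets_distr] refl])
    show ?thesis using TY.nn_integral_fst[OF m] by simp
  qed
  also have "\<dots> = (\<integral>\<^sup>+x. f x * (\<integral>\<^sup>+y. g y \<partial>distr M T Y) \<partial>distr M S X)"
    using g by (intro nn_integral_cong nn_integral_cmult) simp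
  also have "\<dots> = (\<integral>\<^sup>+x. f x \<partial>distr M S X) * (\<integral>\<^sup>+y. g y \<partial>distr M T Y)"
    using f by (intro nn_integral_multc) simp
  also have "\<dots> = (\<integral>\<^sup>+\<omega>. f (X \<omega>) \<partial>M) * (\<integral>\<^sup>+\<omega>. g (Y \<omega>) \<partial>M)"
    using f g rvX rvY by (simp add: nn_integral_distr)
  finally show ?thesis .
qed

lemma hoeffding_mgf:
  fixes f :: "'a \<Rightarrow> real"
  assumes P: "prob_space M" and f: "f \<in> borel_measurable M" and ae: "AE x in M. f x \<in> {0..1}"
    and mu: "(\<integral>x. f x \<partial>M) = \<mu>"
  shows "(\<integral>\<^sup>+x. ennreal (exp (l * (f x - \<mu>))) \<partial>M) \<le> ennreal (exp (l\<^sup>2 / 8))"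
proof -
  interpret prob_space M by (rule P)
  consider "l > 0" | "l < 0" | "l = 0" by linarith
  then show ?thesis
  proof cases
    case 1
    interpret interval_bounded_random_variable M f 0 1
      by unfold_locales (use f ae in auto)
    show ?thesis using Hoeffdings_lemma_nn_integral[OF 1] mu by simp
  next
    case 2
    interpret interval_bounded_random_variable M "\<lambda>x. - f x" "-1" 0
      by unfold_locales (use f ae in \<open>auto elim!: eventually_mono\<close>)
    have "- l > 0" using 2 by simp
    from Hoeffdings_lemma_nn_integral[OF this] show ?thesis using mu by (simp add: algebra_simps)
  next
    case 3
    then show ?thesis by (simp add: emeasure_space_1)
  qed
qed

definition bsf :: "(nat \<Rightarrow> nat) \<Rightarrow> nat \<Rightarrow> odaaf_state \<Rightarrow> nat \<Rightarrow> nat" where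
  "bsf n m st j = bS n m st (THE p. p < length (arms st) \<and> arms st ! p = j)"

lemma bsf_dsc[simp]: "bsf n m (dsc st) j = bsf n m st j"
  unfolding bsf_def by (simp add: arms_def)

lemma blk_decomp:
  assumes inv: "inv K st" and j: "j \<in> act st"
  shows "samp (odaaf_phase n pick r dl m st) j = samp st j \<union> {bsf n m st j ..< bsf n m st j + (n m - card (samp st j))}"
    and "start st \<le> bsf n m st j"
    and "samp st j \<inter> {bsf n m st j ..< bsf n m st j + (n m - card (samp st j))} = {}"
proof -
  have f: "finite (act st)" and sa: "\<And>t. t \<in> samp st j \<Longrightarrow> t < start st"
    using inv unfolding inv_def by auto
  obtain p where p: "p < length (arms st)" "arms st ! p = j" using arm_index[OF f j] .
  have the: "(THE p. p < length (arms st) \<and> arms st ! p = j) = p"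
    using p distinct_arms[of st] by (auto simp: nth_eq_iff_index_eq)
  have b: "bsf n m st j = bS n m st p" unfolding bsf_def the ..
  have blk: "{t. start st \<le> t \<and> t < pe n m st \<and> pP n m st t = j} = {bsf n m st j ..< bsf n m st j + (n m - card (samp st j))}"
    unfolding block_eq[OF f p] b bS_Suc[OF p(1)] p(2) ..
  show "samp (odaaf_phase n pick r dl m st) j = samp st j \<union> {bsf n m st j ..< bsf n m st j + (n m - card (samp st j))}"
    by (simp add: phase_eq pS_def blk)
  show s: "start st \<le> bsf n m st j" unfolding b using bS_mono[of 0 p n m st] bS_0[of n m st] by simp
  show "samp st j \<inter> {bsf n m st j ..< bsf n m st j + (n m - card (samp st j))} = {}"
    using sa s by force
qed

lemma agree_sym: "agree K s r dl r' dl' \<Longrightarrow> agree K s r' dl' r dl"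
  unfolding agree_def by auto

lemma nat_floor_meas: "(\<lambda>y::real. nat \<lfloor>y\<rfloor>) \<in> measurable borel (count_space UNIV)"
proof -
  have "(\<lambda>y::real. nat \<lfloor>y\<rfloor>) -` {a} \<inter> space borel \<in> sets borel" for a :: nat
  proof (cases "a = 0")
    case True
    then have "(\<lambda>y::real. nat \<lfloor>y\<rfloor>) -` {a} \<inter> space borel = {..<1}" by auto
    then show ?thesis by simp
  next
    case False
    then have "(\<lambda>y::real. nat \<lfloor>y\<rfloor>) -` {a} \<inter> space borel = {real a..<real a + 1}"
      by (auto simp: le_floor_iff floor_less_iff nat_eq_iff floor_eq_iff)
    then show ?thesis by simp
  qed
  then show ?thesis by (subst measurable_count_space_eq2_countable) auto
qed

locale bandit = prob_space M for M :: "'a measure" +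
  fixes K :: nat and n :: "nat \<Rightarrow> nat" and pick :: "nat \<Rightarrow> nat set \<Rightarrow> nat"
    and R :: "nat \<Rightarrow> nat \<Rightarrow> 'a \<Rightarrow> real" and tau :: "nat \<Rightarrow> nat \<Rightarrow> 'a \<Rightarrow> nat"
    and zeta :: "nat \<Rightarrow> real measure" and mu :: "nat \<Rightarrow> real" and D :: "nat measure"
    and d :: nat and j :: nat
  assumes K1: "K \<ge> 1" and n0: "n 0 = 0" and smono: "strict_mono n"
    and pick: "\<And>m A. A \<noteq> {} \<Longrightarrow> pick m A \<in> A"
    and Rm[measurable]: "\<And>l j. R l j \<in> borel_measurable M"
    and taum[measurable]: "\<And>l j. tau l j \<in> measurable M (count_space UNIV)"
    and ind: "indep_vars (\<lambda>_. borel) (\<lambda>(l, j, b) \<omega>. if b then R l j \<omega> else real (tau l j \<omega>)) ({1..} \<times> {1..K} \<times> UNIV)"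
    and Rd: "\<And>l j. l \<ge> 1 \<Longrightarrow> j \<in> {1..K} \<Longrightarrow> distr M borel (R l j) = zeta j"
    and zeta01: "\<And>j. j \<in> {1..K} \<Longrightarrow> (AE x in zeta j. 0 \<le> x \<and> x \<le> 1)"
    and mudef: "\<And>j. j \<in> {1..K} \<Longrightarrow> mu j = (\<integral>x. x \<partial>zeta j)"
    and taud: "\<And>l j. l \<ge> 1 \<Longrightarrow> j \<in> {1..K} \<Longrightarrow> distr M (count_space UNIV) (tau l j) = D"
    and Dd: "AE x in D. x \<le> d"
    and jK: "j \<in> {1..K}"
begin

sublocale G: gen M K n pick R tau
proof
  show "\<And>l i. R l i \<in> borel_measurable M" by (rule Rm)
  show "\<And>l i. tau l i \<in> M \<rightarrow>\<^sub>M count_space UNIV" by (rule taum)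
  show "1 \<le> K" by (rule K1)
  show "\<And>m A. A \<noteq> {} \<Longrightarrow> pick m A \<in> A" by (rule pick)
qed

definition X :: "nat \<times> nat \<times> bool \<Rightarrow> 'a \<Rightarrow> real" where
  "X = (\<lambda>(l, j, b) \<omega>. if b then R l j \<omega> else real (tau l j \<omega>))"

lemma indX: "indep_vars (\<lambda>_. borel) X ({1..} \<times> {1..K} \<times> UNIV)"
  using ind unfolding X_def .

lemma mono_n: "mono n" using smono by (rule strict_mono_mono)

lemma R01_AE: "1 \<le> l \<Longrightarrow> i \<in> {1..K} \<Longrightarrow> AE \<omega> in M. 0 \<le> R l i \<omega> \<and> R l i \<omega> \<le> 1"
proof -
  assume l: "1 \<le> l" and i: "i \<in> {1..K}"
  have "AE x in distr M borel (R l i). 0 \<le> x \<and> x \<le> 1" by (subst Rd[OF l i]) (rule zeta01[OF i])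
  moreover have "{x \<in> space borel. 0 \<le> x \<and> x \<le> (1::real)} \<in> sets borel" by measurable
  ultimately show ?thesis using AE_distr_iff[OF Rm[of l i], of "\<lambda>x. 0 \<le> x \<and> x \<le> 1"] by simp
qed

lemma tau_AE: "1 \<le> l \<Longrightarrow> i \<in> {1..K} \<Longrightarrow> AE \<omega> in M. tau l i \<omega> \<le> d"
proof -
  assume l: "1 \<le> l" and i: "i \<in> {1..K}"
  have "AE x in distr M (count_space UNIV) (tau l i). x \<le> d" by (subst taud[OF l i]) (rule Dd)
  then show ?thesis using AE_distr_iff[OF taum[of l i], of "\<lambda>x. x \<le> d"] by simp
qed

lemma good_AE: "AE \<omega> in M. good K d (\<lambda>l i. R l i \<omega>) (\<lambda>l i. tau l i \<omega>)"
proof -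
  have "AE \<omega> in M. \<forall>l. \<forall>i. 1 \<le> l \<longrightarrow> i \<in> {1..K} \<longrightarrow> 0 \<le> R l i \<omega> \<and> R l i \<omega> \<le> 1 \<and> tau l i \<omega> \<le> d"
  proof (subst AE_all_countable, intro allI, subst AE_all_countable, intro allI)
    fix l i
    show "AE \<omega> in M. 1 \<le> l \<longrightarrow> i \<in> {1..K} \<longrightarrow> 0 \<le> R l i \<omega> \<and> R l i \<omega> \<le> 1 \<and> tau l i \<omega> \<le> d"
    proof (cases "1 \<le> l \<and> i \<in> {1..K}")
      case True
      have a: "AE \<omega> in M. 0 \<le> R l i \<omega> \<and> R l i \<omega> \<le> 1" using True R01_AE by blast
      have b: "AE \<omega> in M. tau l i \<omega> \<le> d" using True tau_AE by blast
      from a b show ?thesis by eventually_elim auto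
    qed auto
  qed
  then show ?thesis unfolding good_def by simp
qed

lemma mgf_single:
  assumes "1 \<le> l"
  shows "(\<integral>\<^sup>+\<omega>. ennreal (exp (lam * (R l j \<omega> - mu j))) \<partial>M) \<le> ennreal (exp (lam\<^sup>2 / 8))"
proof (rule hoeffding_mgf)
  show "prob_space M" by (rule prob_space_axioms)
  show "R l j \<in> borel_measurable M" by (rule Rm)
  show "AE x in M. R l j x \<in> {0..1}" using R01_AE[OF assms jK] by (auto elim!: eventually_mono)
  have "(\<integral>x. R l j x \<partial>M) = (\<integral>x. x \<partial>distr M borel (R l j))"
    by (rule integral_distr[symmetric]) (rule Rm, simp)
  then show "(\<integral>x. R l j x \<partial>M) = mu j" using Rd[OF assms jK] mudef[OF jK] by simp
qed


definition Ia :: "nat \<Rightarrow> (nat \<times> nat \<times> bool) set" where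
  "Ia a = {1..<a} \<times> {1..K} \<times> UNIV"

definition Ib :: "nat \<Rightarrow> nat \<Rightarrow> (nat \<times> nat \<times> bool) set" where
  "Ib a L = {a..<a+L} \<times> {j} \<times> {True}"

lemma indep_ab:
  assumes "1 \<le> a"
  shows "indep_var (PiM (Ia a) (\<lambda>_. borel)) (\<lambda>\<omega>. restrict (\<lambda>i. X i \<omega>) (Ia a))
                   (PiM (Ib a L) (\<lambda>_. borel)) (\<lambda>\<omega>. restrict (\<lambda>i. X i \<omega>) (Ib a L))"
proof (rule indep_var_restrict[OF indX])
  show "Ia a \<inter> Ib a L = {}" unfolding Ia_def Ib_def by auto
  show "Ia a \<subseteq> {1..} \<times> {1..K} \<times> UNIV" unfolding Ia_def by auto
  show "Ib a L \<subseteq> {1..} \<times> {1..K} \<times> UNIV" unfolding Ib_def using assms jK by auto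
qed

lemma X_meas[measurable]: "X i \<in> borel_measurable M"
proof -
  obtain l i' b where i: "i = (l, i', b)" by (cases i) auto
  show ?thesis unfolding i X_def by (cases b) simp_all
qed

lemma card_Ib: "card (Ib a L) = L"
proof -
  have "Ib a L = (\<lambda>l. (l, j, True)) ` {a..<a+L}" unfolding Ib_def by auto
  moreover have "inj_on (\<lambda>l. (l, j, True)) {a..<a+L}" by (auto simp: inj_on_def)
  ultimately show ?thesis by (simp add: card_image)
qed

lemma block_prod:
  assumes a: "1 \<le> a"
  shows "(\<integral>\<^sup>+\<omega>. (\<Prod>i\<in>Ib a L. ennreal (exp (lam * (X i \<omega> - mu j)))) \<partial>M) \<le> ennreal (exp (lam\<^sup>2 / 8)) ^ L"
proof -
  have sub: "Ib a L \<subseteq> {1..} \<times> {1..K} \<times> UNIV" unfolding Ib_def using a jK by auto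
  have ind2: "indep_vars (\<lambda>_. borel) (\<lambda>i \<omega>. ennreal (exp (lam * (X i \<omega> - mu j)))) (Ib a L)"
    by (rule indep_vars_compose2[OF indep_vars_subset[OF indX sub], where Y="\<lambda>_ x. ennreal (exp (lam * (x - mu j)))"]) simp
  have fin: "finite (Ib a L)" unfolding Ib_def by simp
  have "(\<integral>\<^sup>+\<omega>. (\<Prod>i\<in>Ib a L. ennreal (exp (lam * (X i \<omega> - mu j)))) \<partial>M)
        = (\<Prod>i\<in>Ib a L. \<integral>\<^sup>+\<omega>. ennreal (exp (lam * (X i \<omega> - mu j))) \<partial>M)"
    by (rule indep_vars_nn_integral[OF fin ind2]) simp
  also have "\<dots> \<le> (\<Prod>i\<in>Ib a L. ennreal (exp (lam\<^sup>2 / 8)))"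
  proof (rule prod_mono_ennreal)
    fix i assume i: "i \<in> Ib a L"
    then obtain l where l: "i = (l, j, True)" "a \<le> l" unfolding Ib_def by auto
    have "1 \<le> l" using l a by simp
    then show "(\<integral>\<^sup>+\<omega>. ennreal (exp (lam * (X i \<omega> - mu j))) \<partial>M) \<le> ennreal (exp (lam\<^sup>2 / 8))"
      using mgf_single[of l lam] unfolding l(1) X_def by simp
  qed
  also have "\<dots> = ennreal (exp (lam\<^sup>2 / 8)) ^ L" using card_Ib[of a L] by simp
  finally show ?thesis .
qed


definition rT :: "nat \<Rightarrow> nat \<Rightarrow> nat \<Rightarrow> (nat \<times> nat \<times> bool \<Rightarrow> real) \<Rightarrow> real" where
  "rT a l i x = (if (l, i, True) \<in> Ia a then x (l, i, True) else 0)"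

definition dT :: "nat \<Rightarrow> nat \<Rightarrow> nat \<Rightarrow> (nat \<times> nat \<times> bool \<Rightarrow> real) \<Rightarrow> nat" where
  "dT a l i x = (if (l, i, False) \<in> Ia a then nat \<lfloor>x (l, i, False)\<rfloor> else 0)"

lemma rT_meas: "rT a l i \<in> borel_measurable (PiM (Ia a) (\<lambda>_. borel))"
proof (cases "(l, i, True) \<in> Ia a")
  case True
  then show ?thesis unfolding rT_def
    using measurable_component_singleton[OF True, of "\<lambda>_. borel"] by simp
next
  case False then show ?thesis unfolding rT_def by simp
qed

lemma dT_meas: "dT a l i \<in> measurable (PiM (Ia a) (\<lambda>_. borel)) (count_space UNIV)"
proof (cases "(l, i, False) \<in> Ia a")
  case True
  have "(\<lambda>x::nat \<times> nat \<times> bool \<Rightarrow> real. nat \<lfloor>x (l, i, False)\<rfloor>) \<in> measurable (PiM (Ia a) (\<lambda>_. borel)) (count_space UNIV)"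
    using measurable_compose[OF measurable_component_singleton[OF True, of "\<lambda>_. borel :: real measure"] nat_floor_meas] unfolding comp_def .
  then show ?thesis unfolding dT_def using True by simp
next
  case False then show ?thesis unfolding dT_def by simp
qed

lemma gen_T: "gen (PiM (Ia a) (\<lambda>_. borel)) K pick (rT a) (dT a)"
proof
  show "\<And>l i. rT a l i \<in> borel_measurable (PiM (Ia a) (\<lambda>_. borel))" by (rule rT_meas)
  show "\<And>l i. dT a l i \<in> (PiM (Ia a) (\<lambda>_. borel)) \<rightarrow>\<^sub>M count_space UNIV" by (rule dT_meas)
  show "1 \<le> K" by (rule K1)
  show "\<And>m A. A \<noteq> {} \<Longrightarrow> pick m A \<in> A" by (rule pick)
qed

abbreviation RUNT :: "nat \<Rightarrow> nat \<Rightarrow> (nat \<times> nat \<times> bool \<Rightarrow> real) \<Rightarrow> odaaf_state" where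
  "RUNT a k x \<equiv> odaaf_run K n pick (\<lambda>l i. rT a l i x) (\<lambda>l i. dT a l i x) k"

abbreviation XR :: "nat \<Rightarrow> 'a \<Rightarrow> (nat \<times> nat \<times> bool \<Rightarrow> real)" where
  "XR a \<omega> \<equiv> restrict (\<lambda>i. X i \<omega>) (Ia a)"

lemma agree_T: "agree K a (\<lambda>l i. R l i \<omega>) (\<lambda>l i. tau l i \<omega>) (\<lambda>l i. rT a l i (XR a \<omega>)) (\<lambda>l i. dT a l i (XR a \<omega>))"
  unfolding agree_def rT_def dT_def Ia_def X_def by simp

definition SS :: "odaaf_state \<Rightarrow> (nat \<Rightarrow> nat \<Rightarrow> real) \<Rightarrow> real" where
  "SS st r = (\<Sum>t\<in>samp st j. r t j - mu j)"

definition tm :: "real \<Rightarrow> nat \<Rightarrow> nat \<Rightarrow> odaaf_state \<Rightarrow> (nat \<Rightarrow> nat \<Rightarrow> real) \<Rightarrow> ennreal" where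
  "tm lam k a st r = (if j \<in> act st \<and> bsf n (Suc k) st j = a then ennreal (exp (lam * SS st r)) else 0)"

lemma tm_dsc[simp]: "tm lam k a (dsc st) r = tm lam k a st r"
  unfolding tm_def SS_def by simp

lemma SS_meas:
  assumes "\<And>l i. r l i \<in> borel_measurable N"
  shows "(\<lambda>x. SS v (\<lambda>l i. r l i x)) \<in> borel_measurable N"
  unfolding SS_def by (intro borel_measurable_sum borel_measurable_diff assms borel_measurable_const)

lemma tm_v_meas:
  assumes "\<And>l i. r l i \<in> borel_measurable N"
  shows "(\<lambda>x. tm lam k a v (\<lambda>l i. r l i x)) \<in> borel_measurable N"
proof (cases "j \<in> act v \<and> bsf n (Suc k) v j = a")
  case True
  have s: "(\<lambda>x. SS v (\<lambda>l i. r l i x)) \<in> borel_measurable N" by (rule SS_meas[OF assms])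
  have s1: "(\<lambda>x. lam * SS v (\<lambda>l i. r l i x)) \<in> borel_measurable N"
    by (rule borel_measurable_times[OF borel_measurable_const s])
  have s2: "(\<lambda>x. exp (lam * SS v (\<lambda>l i. r l i x))) \<in> borel_measurable N"
    using measurable_compose[OF s1 borel_measurable_exp] by (simp add: comp_def)
  have "(\<lambda>x. ennreal (exp (lam * SS v (\<lambda>l i. r l i x)))) \<in> borel_measurable N"
    using measurable_compose[OF s2 measurable_ennreal] by (simp add: comp_def)
  then show ?thesis unfolding tm_def using True by simp
next
  case False then show ?thesis unfolding tm_def by (simp del: de_Morgan_conj)
qed

lemma tm_meas: "(\<lambda>\<omega>. tm lam k a (G.RUN k \<omega>) (\<lambda>l i. R l i \<omega>)) \<in> borel_measurable M"
proof -
  have "(\<lambda>\<omega>. tm lam k a (dsc (G.RUN k \<omega>)) (\<lambda>l i. R l i \<omega>)) \<in> borel_measurable M"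
    by (rule G.meas_state[where g="\<lambda>v \<omega>. tm lam k a v (\<lambda>l i. R l i \<omega>)" and k=k]) (rule tm_v_meas[OF Rm])
  then show ?thesis by simp
qed

lemma tmT_meas: "(\<lambda>x. tm lam k a (RUNT a k x) (\<lambda>l i. rT a l i x)) \<in> borel_measurable (PiM (Ia a) (\<lambda>_. borel))"
proof -
  interpret T: gen "PiM (Ia a) (\<lambda>_. borel)" K n pick "rT a" "dT a" by (rule gen_T)
  have "(\<lambda>x. tm lam k a (dsc (RUNT a k x)) (\<lambda>l i. rT a l i x)) \<in> borel_measurable (PiM (Ia a) (\<lambda>_. borel))"
    by (rule T.meas_state[where g="\<lambda>v x. tm lam k a v (\<lambda>l i. rT a l i x)" and k=k]) (rule tm_v_meas[OF rT_meas])
  then show ?thesis by simp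
qed

lemma inv_RUN: "inv K (odaaf_run K n pick r dl k)"
  by (rule inv_run[OF K1 pick])

lemma trunc_eq:
  assumes w: "\<omega> \<in> space M"
  shows "tm lam k a (RUNT a k (XR a \<omega>)) (\<lambda>l i. rT a l i (XR a \<omega>)) = tm lam k a (G.RUN k \<omega>) (\<lambda>l i. R l i \<omega>)"
proof -
  let ?r = "\<lambda>l i. R l i \<omega>" and ?dl = "\<lambda>l i. tau l i \<omega>"
  let ?r' = "\<lambda>l i. rT a l i (XR a \<omega>)" and ?dl' = "\<lambda>l i. dT a l i (XR a \<omega>)"
  have ag: "agree K a ?r ?dl ?r' ?dl'" by (rule agree_T)
  have SSeq: "SS st ?r' = SS st ?r" if "inv K st" "start st \<le> a" for st
  proof -
    have "?r' t j = ?r t j" if "t \<in> samp st j" for t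
    proof -
      have "1 \<le> t" "t < start st" using \<open>inv K st\<close> that unfolding inv_def by auto
      then show ?thesis using \<open>start st \<le> a\<close> jK unfolding rT_def Ia_def X_def by simp
    qed
    then show ?thesis unfolding SS_def by (intro sum.cong) auto
  qed
  show ?thesis
  proof (cases "j \<in> act (G.RUN k \<omega>) \<and> bsf n (Suc k) (G.RUN k \<omega>) j = a")
    case True
    have "start (G.RUN k \<omega>) \<le> bsf n (Suc k) (G.RUN k \<omega>) j"
      using blk_decomp(2)[OF inv_RUN[where r="?r" and dl="?dl" and k=k], where j=j and n=n and m="Suc k"] True by simp
    then have "start (G.RUN k \<omega>) \<le> a" using True by simp
    then have "agree K (start (G.RUN k \<omega>)) ?r ?dl ?r' ?dl'" using ag by (rule agree_mono[rotated])
    then have eq: "RUNT a k (XR a \<omega>) = G.RUN k \<omega>" using loc_run[where pick=pick and K=K and n=n, OF K1 pick] by blast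
    show ?thesis unfolding eq tm_def using SSeq[OF inv_RUN \<open>start (G.RUN k \<omega>) \<le> a\<close>] by simp
  next
    case False
    have "\<not> (j \<in> act (RUNT a k (XR a \<omega>)) \<and> bsf n (Suc k) (RUNT a k (XR a \<omega>)) j = a)"
    proof
      assume A: "j \<in> act (RUNT a k (XR a \<omega>)) \<and> bsf n (Suc k) (RUNT a k (XR a \<omega>)) j = a"
      have "start (RUNT a k (XR a \<omega>)) \<le> bsf n (Suc k) (RUNT a k (XR a \<omega>)) j"
        using blk_decomp(2)[OF inv_RUN[where r="?r'" and dl="?dl'" and k=k], where j=j and n=n and m="Suc k"] A by simp
      then have "start (RUNT a k (XR a \<omega>)) \<le> a" using A by simp
      then have "agree K (start (RUNT a k (XR a \<omega>))) ?r' ?dl' ?r ?dl"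
        using agree_sym[OF ag] by (rule agree_mono[rotated])
      then have eq: "G.RUN k \<omega> = RUNT a k (XR a \<omega>)" using loc_run[where pick=pick and K=K and n=n, OF K1 pick] by blast
      then show False using A False by simp
    qed
    then show ?thesis using False unfolding tm_def by simp
  qed
qed


lemma SS_next:
  assumes ja: "j \<in> act (odaaf_run K n pick r dl k)"
  shows "SS (odaaf_run K n pick r dl (Suc k)) r' = SS (odaaf_run K n pick r dl k) r' +
     (\<Sum>l\<in>{bsf n (Suc k) (odaaf_run K n pick r dl k) j ..< bsf n (Suc k) (odaaf_run K n pick r dl k) j + (n (Suc k) - n k)}. r' l j - mu j)"
proof -
  let ?st = "odaaf_run K n pick r dl k"
  have inv: "inv K ?st" by (rule inv_RUN)
  have card: "card (samp ?st j) = n k" by (rule card_samp_run[OF K1 pick n0 mono_n ja])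
  have fs: "finite (samp ?st j)" using inv unfolding inv_def by auto
  have dec: "samp (odaaf_run K n pick r dl (Suc k)) j = samp ?st j \<union> {bsf n (Suc k) ?st j ..< bsf n (Suc k) ?st j + (n (Suc k) - n k)}"
    using blk_decomp(1)[OF inv ja, where n=n and m="Suc k" and pick=pick and r=r and dl=dl] card by simp
  have disj: "samp ?st j \<inter> {bsf n (Suc k) ?st j ..< bsf n (Suc k) ?st j + (n (Suc k) - n k)} = {}"
    using blk_decomp(3)[OF inv ja, where n=n and m="Suc k"] card by simp
  show ?thesis unfolding SS_def dec by (rule sum.union_disjoint[OF fs _ disj]) simp
qed

definition BP :: "real \<Rightarrow> nat \<Rightarrow> nat \<Rightarrow> 'a \<Rightarrow> ennreal" where
  "BP lam a L \<omega> = (\<Prod>i\<in>Ib a L. ennreal (exp (lam * (X i \<omega> - mu j))))"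

lemma BP_eq: "BP lam a L \<omega> = ennreal (exp (lam * (\<Sum>l\<in>{a..<a+L}. R l j \<omega> - mu j)))"
proof -
  have Ib: "Ib a L = (\<lambda>l. (l, j, True)) ` {a..<a+L}" unfolding Ib_def by auto
  have inj: "inj_on (\<lambda>l. (l, j, True)) {a..<a+L}" by (auto simp: inj_on_def)
  have "BP lam a L \<omega> = (\<Prod>l\<in>{a..<a+L}. ennreal (exp (lam * (R l j \<omega> - mu j))))"
    unfolding BP_def Ib prod.reindex[OF inj] by (simp add: X_def)
  also have "\<dots> = ennreal (\<Prod>l\<in>{a..<a+L}. exp (lam * (R l j \<omega> - mu j)))"
    by (rule prod_ennreal) simp
  also have "(\<Prod>l\<in>{a..<a+L}. exp (lam * (R l j \<omega> - mu j))) = exp (lam * (\<Sum>l\<in>{a..<a+L}. R l j \<omega> - mu j))"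
    by (simp add: exp_sum sum_distrib_left)
  finally show ?thesis .
qed

lemma BP_meas: "BP lam a L \<in> borel_measurable M"
  unfolding BP_def by (intro borel_measurable_prod_ennreal measurable_compose[OF _ measurable_ennreal]
      measurable_compose[OF _ borel_measurable_exp] borel_measurable_times borel_measurable_const borel_measurable_diff X_meas)

lemma single_sum: "(\<Sum>a. if a = a0 then c else (0::ennreal)) = c"
  using sums_unique[OF sums_single[of a0 "\<lambda>_. c"]] by simp

lemma pw_psi:
  "(if j \<in> act (G.RUN k \<omega>) then ennreal (exp (lam * SS (G.RUN k \<omega>) (\<lambda>l i. R l i \<omega>))) else 0)
   = (\<Sum>a. tm lam k a (G.RUN k \<omega>) (\<lambda>l i. R l i \<omega>))"
proof (cases "j \<in> act (G.RUN k \<omega>)")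
  case True
  have "(\<lambda>a. tm lam k a (G.RUN k \<omega>) (\<lambda>l i. R l i \<omega>)) =
        (\<lambda>a. if a = bsf n (Suc k) (G.RUN k \<omega>) j then ennreal (exp (lam * SS (G.RUN k \<omega>) (\<lambda>l i. R l i \<omega>))) else 0)"
    using True unfolding tm_def by (intro ext) auto
  then show ?thesis using True single_sum by simp
next
  case False then show ?thesis unfolding tm_def by simp
qed

lemma pw_phi:
  "(if j \<in> act (G.RUN k \<omega>) then ennreal (exp (lam * SS (G.RUN (Suc k) \<omega>) (\<lambda>l i. R l i \<omega>))) else 0)
   = (\<Sum>a. tm lam k a (G.RUN k \<omega>) (\<lambda>l i. R l i \<omega>) * BP lam a (n (Suc k) - n k) \<omega>)"
proof (cases "j \<in> act (G.RUN k \<omega>)")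
  case True
  let ?a0 = "bsf n (Suc k) (G.RUN k \<omega>) j" and ?L = "n (Suc k) - n k"
  have ss: "SS (G.RUN (Suc k) \<omega>) (\<lambda>l i. R l i \<omega>) = SS (G.RUN k \<omega>) (\<lambda>l i. R l i \<omega>) + (\<Sum>l\<in>{?a0..<?a0 + ?L}. R l j \<omega> - mu j)"
    by (rule SS_next[OF True])
  have "(\<lambda>a. tm lam k a (G.RUN k \<omega>) (\<lambda>l i. R l i \<omega>) * BP lam a ?L \<omega>) =
        (\<lambda>a. if a = ?a0 then ennreal (exp (lam * SS (G.RUN k \<omega>) (\<lambda>l i. R l i \<omega>))) * BP lam ?a0 ?L \<omega> else 0)"
    using True unfolding tm_def by (intro ext) auto
  moreover have "ennreal (exp (lam * SS (G.RUN k \<omega>) (\<lambda>l i. R l i \<omega>))) * BP lam ?a0 ?L \<omega>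
      = ennreal (exp (lam * SS (G.RUN (Suc k) \<omega>) (\<lambda>l i. R l i \<omega>)))"
    unfolding BP_eq ss by (simp add: ennreal_mult[symmetric] distrib_left exp_add)
  ultimately show ?thesis using True single_sum by simp
next
  case False then show ?thesis unfolding tm_def by simp
qed


lemma tm_zero: "tm lam k 0 (odaaf_run K n pick r dl k) r' = 0"
proof -
  let ?st = "odaaf_run K n pick r dl k"
  have "\<not> (j \<in> act ?st \<and> bsf n (Suc k) ?st j = 0)"
  proof
    assume A: "j \<in> act ?st \<and> bsf n (Suc k) ?st j = 0"
    have "start ?st \<le> bsf n (Suc k) ?st j"
      using blk_decomp(2)[OF inv_RUN[where r=r and dl=dl and k=k], where j=j and n=n and m="Suc k"] A by simp
    moreover have "1 \<le> start ?st" using inv_RUN[where r=r and dl=dl and k=k] unfolding inv_def by simp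
    ultimately show False using A by simp
  qed
  then show ?thesis unfolding tm_def by simp
qed

lemma g_meas: "(\<lambda>y. \<Prod>i\<in>Ib a L. ennreal (exp (lam * (y i - mu j)))) \<in> borel_measurable (PiM (Ib a L) (\<lambda>_. borel))"
proof (rule borel_measurable_prod_ennreal)
  fix i assume i: "i \<in> Ib a L"
  have c: "(\<lambda>y::nat \<times> nat \<times> bool \<Rightarrow> real. y i) \<in> borel_measurable (PiM (Ib a L) (\<lambda>_. borel))"
    using measurable_component_singleton[OF i, of "\<lambda>_. borel :: real measure"] by simp
  have c1: "(\<lambda>y::nat \<times> nat \<times> bool \<Rightarrow> real. lam * (y i - mu j)) \<in> borel_measurable (PiM (Ib a L) (\<lambda>_. borel))"
    by (intro borel_measurable_times borel_measurable_diff borel_measurable_const c)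
  have c2: "(\<lambda>y::nat \<times> nat \<times> bool \<Rightarrow> real. exp (lam * (y i - mu j))) \<in> borel_measurable (PiM (Ib a L) (\<lambda>_. borel))"
    using measurable_compose[OF c1 borel_measurable_exp] by (simp add: comp_def)
  show "(\<lambda>y::nat \<times> nat \<times> bool \<Rightarrow> real. ennreal (exp (lam * (y i - mu j)))) \<in> borel_measurable (PiM (Ib a L) (\<lambda>_. borel))"
    using measurable_compose[OF c2 measurable_ennreal] by (simp add: comp_def)
qed

lemma term_bound:
  "(\<integral>\<^sup>+\<omega>. tm lam k a (G.RUN k \<omega>) (\<lambda>l i. R l i \<omega>) * BP lam a L \<omega> \<partial>M)
     \<le> (\<integral>\<^sup>+\<omega>. tm lam k a (G.RUN k \<omega>) (\<lambda>l i. R l i \<omega>) \<partial>M) * ennreal (exp (lam\<^sup>2 / 8)) ^ L"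
proof (cases "a = 0")
  case True
  then show ?thesis using tm_zero by simp
next
  case False
  then have a1: "1 \<le> a" by simp
  define f where "f x = tm lam k a (RUNT a k x) (\<lambda>l i. rT a l i x)" for x
  define g where "g y = (\<Prod>i\<in>Ib a L. ennreal (exp (lam * (y i - mu j))))" for y :: "nat \<times> nat \<times> bool \<Rightarrow> real"
  have fm: "f \<in> borel_measurable (PiM (Ia a) (\<lambda>_. borel))" unfolding f_def by (rule tmT_meas)
  have gm: "g \<in> borel_measurable (PiM (Ib a L) (\<lambda>_. borel))" unfolding g_def by (rule g_meas)
  have fe: "f (XR a \<omega>) = tm lam k a (G.RUN k \<omega>) (\<lambda>l i. R l i \<omega>)" if "\<omega> \<in> space M" for \<omega>
    unfolding f_def by (rule trunc_eq[OF that])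
  have ge: "g (restrict (\<lambda>i. X i \<omega>) (Ib a L)) = BP lam a L \<omega>" for \<omega>
    unfolding g_def BP_def by (intro prod.cong) auto
  have "(\<integral>\<^sup>+\<omega>. tm lam k a (G.RUN k \<omega>) (\<lambda>l i. R l i \<omega>) * BP lam a L \<omega> \<partial>M)
      = (\<integral>\<^sup>+\<omega>. f (XR a \<omega>) * g (restrict (\<lambda>i. X i \<omega>) (Ib a L)) \<partial>M)"
    using fe ge by (intro nn_integral_cong) simp
  also have "\<dots> = (\<integral>\<^sup>+\<omega>. f (XR a \<omega>) \<partial>M) * (\<integral>\<^sup>+\<omega>. g (restrict (\<lambda>i. X i \<omega>) (Ib a L)) \<partial>M)"
    by (rule indep_var_nn_integral_mult[OF indep_ab[OF a1] fm gm])
  also have "\<dots> = (\<integral>\<^sup>+\<omega>. tm lam k a (G.RUN k \<omega>) (\<lambda>l i. R l i \<omega>) \<partial>M) * (\<integral>\<^sup>+\<omega>. BP lam a L \<omega> \<partial>M)"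
    using fe ge by (intro arg_cong2[where f="(*)"] nn_integral_cong) simp_all
  also have "\<dots> \<le> (\<integral>\<^sup>+\<omega>. tm lam k a (G.RUN k \<omega>) (\<lambda>l i. R l i \<omega>) \<partial>M) * ennreal (exp (lam\<^sup>2 / 8)) ^ L"
    using block_prod[OF a1, where L=L and lam=lam] unfolding BP_def by (intro mult_left_mono) simp_all
  finally show ?thesis .
qed

lemma mgf_step:
  "(\<integral>\<^sup>+\<omega>. (if j \<in> act (G.RUN k \<omega>) then ennreal (exp (lam * SS (G.RUN (Suc k) \<omega>) (\<lambda>l i. R l i \<omega>))) else 0) \<partial>M)
   \<le> (\<integral>\<^sup>+\<omega>. (if j \<in> act (G.RUN k \<omega>) then ennreal (exp (lam * SS (G.RUN k \<omega>) (\<lambda>l i. R l i \<omega>))) else 0) \<partial>M)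
      * ennreal (exp (lam\<^sup>2 / 8)) ^ (n (Suc k) - n k)"
proof -
  let ?L = "n (Suc k) - n k" and ?c = "ennreal (exp (lam\<^sup>2 / 8)) ^ (n (Suc k) - n k)"
  let ?t = "\<lambda>a \<omega>. tm lam k a (G.RUN k \<omega>) (\<lambda>l i. R l i \<omega>)"
  have tmm: "?t a \<in> borel_measurable M" for a by (rule tm_meas)
  have "(\<integral>\<^sup>+\<omega>. (if j \<in> act (G.RUN k \<omega>) then ennreal (exp (lam * SS (G.RUN (Suc k) \<omega>) (\<lambda>l i. R l i \<omega>))) else 0) \<partial>M)
      = (\<integral>\<^sup>+\<omega>. (\<Sum>a. ?t a \<omega> * BP lam a ?L \<omega>) \<partial>M)"
    by (simp only: pw_phi)
  also have "\<dots> = (\<Sum>a. \<integral>\<^sup>+\<omega>. ?t a \<omega> * BP lam a ?L \<omega> \<partial>M)"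
    by (rule nn_integral_suminf) (rule borel_measurable_times_ennreal[OF tmm BP_meas])
  also have "\<dots> \<le> (\<Sum>a. (\<integral>\<^sup>+\<omega>. ?t a \<omega> \<partial>M) * ?c)"
    by (rule suminf_le[OF term_bound summableI summableI])
  also have "\<dots> = (\<Sum>a. \<integral>\<^sup>+\<omega>. ?t a \<omega> \<partial>M) * ?c" by simp
  also have "(\<Sum>a. \<integral>\<^sup>+\<omega>. ?t a \<omega> \<partial>M) = (\<integral>\<^sup>+\<omega>. (\<Sum>a. ?t a \<omega>) \<partial>M)"
    by (rule nn_integral_suminf[symmetric]) (rule tmm)
  also have "\<dots> = (\<integral>\<^sup>+\<omega>. (if j \<in> act (G.RUN k \<omega>) then ennreal (exp (lam * SS (G.RUN k \<omega>) (\<lambda>l i. R l i \<omega>))) else 0) \<partial>M)"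
    by (simp only: pw_psi)
  finally show ?thesis .
qed


lemma psi0: "(\<integral>\<^sup>+\<omega>. (if j \<in> act (G.RUN 0 \<omega>) then ennreal (exp (lam * SS (G.RUN 0 \<omega>) (\<lambda>l i. R l i \<omega>))) else 0) \<partial>M) \<le> 1"
proof -
  have "(\<integral>\<^sup>+\<omega>. (if j \<in> act (G.RUN 0 \<omega>) then ennreal (exp (lam * SS (G.RUN 0 \<omega>) (\<lambda>l i. R l i \<omega>))) else 0) \<partial>M)
      \<le> (\<integral>\<^sup>+\<omega>. 1 \<partial>M)"
    by (intro nn_integral_mono) (simp add: SS_def)
  also have "\<dots> = 1" using emeasure_space_1 by simp
  finally show ?thesis .
qed

lemma psi_phi:
  "(\<integral>\<^sup>+\<omega>. (if j \<in> act (G.RUN (Suc k) \<omega>) then ennreal (exp (lam * SS (G.RUN (Suc k) \<omega>) (\<lambda>l i. R l i \<omega>))) else 0) \<partial>M)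
   \<le> (\<integral>\<^sup>+\<omega>. (if j \<in> act (G.RUN k \<omega>) then ennreal (exp (lam * SS (G.RUN (Suc k) \<omega>) (\<lambda>l i. R l i \<omega>))) else 0) \<partial>M)"
proof (intro nn_integral_mono)
  fix \<omega>
  have "act (G.RUN (Suc k) \<omega>) \<subseteq> act (G.RUN k \<omega>)" by (rule act_run_mono)
  then show "(if j \<in> act (G.RUN (Suc k) \<omega>) then ennreal (exp (lam * SS (G.RUN (Suc k) \<omega>) (\<lambda>l i. R l i \<omega>))) else 0)
     \<le> (if j \<in> act (G.RUN k \<omega>) then ennreal (exp (lam * SS (G.RUN (Suc k) \<omega>) (\<lambda>l i. R l i \<omega>))) else 0)"
    by auto
qed

lemma mgf_bound:
  "(\<integral>\<^sup>+\<omega>. (if j \<in> act (G.RUN k \<omega>) then ennreal (exp (lam * SS (G.RUN (Suc k) \<omega>) (\<lambda>l i. R l i \<omega>))) else 0) \<partial>M)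
   \<le> ennreal (exp (lam\<^sup>2 / 8)) ^ n (Suc k)"
proof (induction k)
  case 0
  have "n 0 \<le> n (Suc 0)" using mono_n by (simp add: monoD)
  show ?case
    using order.trans[OF mgf_step[of 0 lam] mult_right_mono[OF psi0[of lam]]] n0 by simp
next
  case (Suc k)
  have le: "n (Suc k) \<le> n (Suc (Suc k))" using mono_n by (simp add: monoD)
  let ?c = "ennreal (exp (lam\<^sup>2 / 8))"
  have "(\<integral>\<^sup>+\<omega>. (if j \<in> act (G.RUN (Suc k) \<omega>) then ennreal (exp (lam * SS (G.RUN (Suc (Suc k)) \<omega>) (\<lambda>l i. R l i \<omega>))) else 0) \<partial>M)
      \<le> (\<integral>\<^sup>+\<omega>. (if j \<in> act (G.RUN (Suc k) \<omega>) then ennreal (exp (lam * SS (G.RUN (Suc k) \<omega>) (\<lambda>l i. R l i \<omega>))) else 0) \<partial>M)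
        * ?c ^ (n (Suc (Suc k)) - n (Suc k))"
    by (rule mgf_step)
  also have "\<dots> \<le> (\<integral>\<^sup>+\<omega>. (if j \<in> act (G.RUN k \<omega>) then ennreal (exp (lam * SS (G.RUN (Suc k) \<omega>) (\<lambda>l i. R l i \<omega>))) else 0) \<partial>M)
        * ?c ^ (n (Suc (Suc k)) - n (Suc k))"
    by (intro mult_right_mono psi_phi) simp
  also have "\<dots> \<le> ?c ^ n (Suc k) * ?c ^ (n (Suc (Suc k)) - n (Suc k))"
    by (intro mult_right_mono Suc.IH) simp
  also have "\<dots> = ?c ^ n (Suc (Suc k))" using le by (simp add: power_add[symmetric])
  finally show ?case .
qed

lemma pred_state:
  assumes "\<And>v. {\<omega> \<in> space M. P v \<omega>} \<in> sets M"
  shows "{\<omega> \<in> space M. P (dsc (G.RUN k \<omega>)) \<omega>} \<in> sets M"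
proof -
  have "(\<lambda>\<omega>. P (dsc (G.RUN k \<omega>)) \<omega>) \<in> measurable M (count_space UNIV)"
    by (rule G.meas_state[where g=P and k=k]) (use assms in \<open>simp add: Measurable.pred_def\<close>)
  then show ?thesis unfolding Measurable.pred_def .
qed


lemma SS_RUN_Suc: "SS (G.RUN (Suc k) \<omega>) r' = (\<Sum>t\<in>pS n (Suc k) (dsc (G.RUN k \<omega>)) j. r' t j - mu j)"
  unfolding G.RUN_Suc[where k=k and x=\<omega>] SS_def by (simp add: phase_eq)

lemma tail:
  fixes k :: nat
  assumes s: "s\<^sup>2 = (1::real)" and eps: "0 \<le> eps"
  defines "E \<equiv> {\<omega> \<in> space M. j \<in> act (G.RUN k \<omega>) \<and> real (n (Suc k)) * eps < s * SS (G.RUN (Suc k) \<omega>) (\<lambda>l i. R l i \<omega>)}"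
  shows "E \<in> sets M" and "emeasure M E \<le> ennreal (exp (- 2 * real (n (Suc k)) * eps\<^sup>2))"
proof -
  let ?m = "Suc k"
  define P where "P v \<omega> = (j \<in> act v \<and> real (n ?m) * eps < s * (\<Sum>t\<in>pS n ?m v j. R t j \<omega> - mu j))" for v \<omega>
  have "E = {\<omega> \<in> space M. P (dsc (G.RUN k \<omega>)) \<omega>}"
    unfolding E_def P_def SS_RUN_Suc by simp
  moreover have "{\<omega> \<in> space M. P v \<omega>} \<in> sets M" for v
    unfolding P_def by measurable
  ultimately show Em: "E \<in> sets M" using pred_state[of P k] by simp
  define lam where "lam = 4 * s * eps"
  define F where "F \<omega> = (if j \<in> act (G.RUN k \<omega>) then ennreal (exp (lam * SS (G.RUN ?m \<omega>) (\<lambda>l i. R l i \<omega>))) else 0)" for \<omega>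
  define c where "c = ennreal (exp (- 4 * real (n ?m) * eps\<^sup>2))"
  have Fm: "F \<in> borel_measurable M"
  proof -
    define g where "g v \<omega> = (if j \<in> act v then ennreal (exp (lam * (\<Sum>t\<in>pS n ?m v j. R t j \<omega> - mu j))) else 0)" for v \<omega>
    have "(\<lambda>\<omega>. g (dsc (G.RUN k \<omega>)) \<omega>) \<in> borel_measurable M"
      by (rule G.meas_state[where g=g and k=k]) (unfold g_def, measurable)
    moreover have "g (dsc (G.RUN k \<omega>)) \<omega> = F \<omega>" for \<omega>
      unfolding g_def F_def SS_RUN_Suc by simp
    ultimately show ?thesis by simp
  qed
  have ind: "indicator E \<omega> \<le> F \<omega> * c" for \<omega>
  proof (cases "\<omega> \<in> E")
    case True
    then have ja: "j \<in> act (G.RUN k \<omega>)" and lt: "real (n ?m) * eps < s * SS (G.RUN ?m \<omega>) (\<lambda>l i. R l i \<omega>)"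
      unfolding E_def by auto
    have "4 * eps * (real (n ?m) * eps) \<le> 4 * eps * (s * SS (G.RUN ?m \<omega>) (\<lambda>l i. R l i \<omega>))"
      using lt eps by (intro mult_left_mono) auto
    then have "0 \<le> lam * SS (G.RUN ?m \<omega>) (\<lambda>l i. R l i \<omega>) - 4 * real (n ?m) * eps\<^sup>2"
      unfolding lam_def power2_eq_square by (simp add: algebra_simps)
    then have "1 \<le> exp (lam * SS (G.RUN ?m \<omega>) (\<lambda>l i. R l i \<omega>) - 4 * real (n ?m) * eps\<^sup>2)" by simp
    then have "1 \<le> ennreal (exp (lam * SS (G.RUN ?m \<omega>) (\<lambda>l i. R l i \<omega>))) * c"
      unfolding c_def by (simp add: ennreal_mult[symmetric] exp_add[symmetric] exp_diff)
    then show ?thesis using True ja unfolding F_def by simp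
  qed (simp)
  have "emeasure M E = (\<integral>\<^sup>+\<omega>. indicator E \<omega> \<partial>M)" using Em by simp
  also have "\<dots> \<le> (\<integral>\<^sup>+\<omega>. F \<omega> * c \<partial>M)" by (intro nn_integral_mono ind)
  also have "\<dots> = (\<integral>\<^sup>+\<omega>. F \<omega> \<partial>M) * c" by (rule nn_integral_multc[OF Fm])
  also have "\<dots> \<le> ennreal (exp (lam\<^sup>2 / 8)) ^ n ?m * c"
    unfolding F_def by (intro mult_right_mono mgf_bound) simp
  also have "\<dots> = ennreal (exp (- 2 * real (n ?m) * eps\<^sup>2))"
  proof -
    have "lam\<^sup>2 = 16 * eps\<^sup>2" unfolding lam_def using s by (simp add: power_mult_distrib)
    then have "ennreal (exp (lam\<^sup>2 / 8)) ^ n ?m = ennreal (exp (real (n ?m) * (2 * eps\<^sup>2)))"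
      by (simp add: ennreal_power exp_of_nat_mult[symmetric])
    then show ?thesis unfolding c_def by (simp add: ennreal_mult[symmetric] exp_add[symmetric] algebra_simps)
  qed
  finally show "emeasure M E \<le> ennreal (exp (- 2 * real (n (Suc k)) * eps\<^sup>2))" .
qed


lemma xbar_RUN_Suc: "xbar (G.RUN (Suc k) \<omega>) i = pX n (\<lambda>l i. R l i \<omega>) (\<lambda>l i. tau l i \<omega>) (Suc k) (dsc (G.RUN k \<omega>)) i"
  unfolding G.RUN_Suc[where k=k and x=\<omega>] by (simp add: phase_eq)

lemma npos: "1 \<le> m \<Longrightarrow> 0 < n m"
  using smono n0 by (metis gr0I not_one_le_zero strict_mono_less)

lemma final:
  assumes m: "m \<ge> 1" and T: "T \<ge> 1"
  shows "(let w = sqrt (ln (real T * (tol m)\<^sup>2) / (2 * real (n m))) + real m * real d / real (n m);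
              E = {\<omega> \<in> space M.
                    j \<in> act (odaaf_run K n pick (\<lambda>l i. R l i \<omega>) (\<lambda>l i. tau l i \<omega>) (m - 1))
                  \<and> \<bar>xbar (odaaf_run K n pick (\<lambda>l i. R l i \<omega>) (\<lambda>l i. tau l i \<omega>) m) j - mu j\<bar> > w}
          in E \<in> sets M \<and> measure M E \<le> 2 / (real T * (tol m)\<^sup>2))"
proof -
  obtain k where k: "m = Suc k" using m by (cases m) auto
  define w where "w = sqrt (ln (real T * (tol m)\<^sup>2) / (2 * real (n m))) + real m * real d / real (n m)"
  define E where "E = {\<omega> \<in> space M. j \<in> act (G.RUN (m - 1) \<omega>) \<and> \<bar>xbar (G.RUN m \<omega>) j - mu j\<bar> > w}"
  define P where "P v \<omega> = (j \<in> act v \<and> w < \<bar>pX n (\<lambda>l i. R l i \<omega>) (\<lambda>l i. tau l i \<omega>) m v j - mu j\<bar>)" for v \<omega>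
  have "E = {\<omega> \<in> space M. P (dsc (G.RUN k \<omega>)) \<omega>}"
    unfolding E_def P_def k xbar_RUN_Suc by simp
  moreover have "{\<omega> \<in> space M. P v \<omega>} \<in> sets M" for v
  proof -
    note G.pX_meas[measurable]
    show ?thesis unfolding P_def by measurable
  qed
  ultimately have Em: "E \<in> sets M" using pred_state[of P k] by simp
  define c where "c = real T * (tol m)\<^sup>2"
  have cpos: "0 < c" unfolding c_def tol_def using T by simp
  have "measure M E \<le> 2 / c"
  proof (cases "c \<le> 2")
    case True
    have "measure M E \<le> 1" by (rule prob_le_1)
    also have "1 \<le> 2 / c" using True cpos by (simp add: field_simps)
    finally show ?thesis .
  next
    case False
    have nm: "0 < n m" by (rule npos[OF m])
    have lnc: "0 < ln c" using False by simp
    define eps where "eps = sqrt (ln c / (2 * real (n m)))"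
    have eps0: "0 \<le> eps" unfolding eps_def using lnc nm by simp
    have eps2: "eps\<^sup>2 = ln c / (2 * real (n m))" unfolding eps_def using lnc nm by simp
    have wdef: "w = eps + real m * real d / real (n m)" unfolding w_def eps_def c_def ..
    define E1 where "E1 = {\<omega> \<in> space M. j \<in> act (G.RUN k \<omega>) \<and> real (n (Suc k)) * eps < 1 * SS (G.RUN (Suc k) \<omega>) (\<lambda>l i. R l i \<omega>)}"
    define E2 where "E2 = {\<omega> \<in> space M. j \<in> act (G.RUN k \<omega>) \<and> real (n (Suc k)) * eps < (-1) * SS (G.RUN (Suc k) \<omega>) (\<lambda>l i. R l i \<omega>)}"
    have E1m: "E1 \<in> sets M" and E1b: "emeasure M E1 \<le> ennreal (exp (- 2 * real (n (Suc k)) * eps\<^sup>2))"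
      unfolding E1_def by (rule tail[of 1 eps k, OF _ eps0]; simp)+
    have E2m: "E2 \<in> sets M" and E2b: "emeasure M E2 \<le> ennreal (exp (- 2 * real (n (Suc k)) * eps\<^sup>2))"
      unfolding E2_def by (rule tail[of "-1" eps k, OF _ eps0]; simp)+
    have "exp (- 2 * real (n (Suc k)) * eps\<^sup>2) = 1 / c"
      using eps2 nm cpos k by (simp add: exp_minus exp_ln field_simps)
    then have E1b': "emeasure M E1 \<le> ennreal (1 / c)" and E2b': "emeasure M E2 \<le> ennreal (1 / c)"
      using E1b E2b by simp_all
    have ae: "AE \<omega> in M. \<omega> \<in> E \<longrightarrow> \<omega> \<in> E1 \<union> E2"
      using good_AE
    proof eventually_elim
      case (elim \<omega>)
      show ?case
      proof
        assume wE: "\<omega> \<in> E"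
        then have sp: "\<omega> \<in> space M" and ja: "j \<in> act (G.RUN k \<omega>)" and gt: "w < \<bar>xbar (G.RUN m \<omega>) j - mu j\<bar>"
          unfolding E_def k by auto
        have "\<bar>xbar (G.RUN m \<omega>) j - mu j\<bar> \<le> \<bar>SS (G.RUN m \<omega>) (\<lambda>l i. R l i \<omega>)\<bar> / real (n m) + real m * real d / real (n m)"
          unfolding SS_def
        proof (rule det_main[OF K1 pick elim n0 mono_n m nm])
          have "m - 1 = k" using k by simp
          then show "j \<in> act (G.RUN (m - 1) \<omega>)" using ja by (simp only:)
        qed
        then have "eps < \<bar>SS (G.RUN m \<omega>) (\<lambda>l i. R l i \<omega>)\<bar> / real (n m)" using gt wdef by simp
        then have "real (n m) * eps < \<bar>SS (G.RUN m \<omega>) (\<lambda>l i. R l i \<omega>)\<bar>" using nm by (simp add: field_simps)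
        then show "\<omega> \<in> E1 \<union> E2" unfolding E1_def E2_def using sp ja k by (auto simp: abs_if split: if_splits)
      qed
    qed
    have "emeasure M E \<le> emeasure M (E1 \<union> E2)" by (rule emeasure_mono_AE[OF ae]) (use E1m E2m in simp)
    also have "\<dots> \<le> emeasure M E1 + emeasure M E2" by (rule emeasure_subadditive[OF E1m E2m])
    also have "\<dots> \<le> ennreal (1 / c) + ennreal (1 / c)" using E1b' E2b' by (rule add_mono)
    also have "\<dots> = ennreal (2 / c)" using cpos by (simp add: ennreal_plus[symmetric])
    finally have "ennreal (measure M E) \<le> ennreal (2 / c)" using Em by (simp add: emeasure_eq_measure)
    then show ?thesis using cpos by (simp add: ennreal_le_iff)
  qed
  then show ?thesis using Em unfolding Let_def w_def[symmetric] E_def[symmetric] c_def by simp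
qed

end

theorem mainTheorem15:
  fixes M :: "'a measure" and K T d :: nat and n :: "nat \<Rightarrow> nat"
    and pick :: "nat \<Rightarrow> nat set \<Rightarrow> nat"
    and R :: "nat \<Rightarrow> nat \<Rightarrow> 'a \<Rightarrow> real" and tau :: "nat \<Rightarrow> nat \<Rightarrow> 'a \<Rightarrow> nat"
    and zeta :: "nat \<Rightarrow> real measure" and mu :: "nat \<Rightarrow> real" and D :: "nat measure"
    and m j :: nat
  assumes "prob_space M"
    and "K \<ge> 2" and "T \<ge> 1"
    and "n 0 = 0" and "strict_mono n"
    and "\<And>m A. A \<noteq> {} \<Longrightarrow> pick m A \<in> A"
    and "\<And>l j. R l j \<in> borel_measurable M"
    and "\<And>l j. tau l j \<in> measurable M (count_space UNIV)"
    and "prob_space.indep_vars M (\<lambda>_. borel)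
           (\<lambda>(l, j, b) \<omega>. if b then R l j \<omega> else real (tau l j \<omega>))
           ({1..} \<times> {1..K} \<times> UNIV)"
    and "\<And>l j. l \<ge> 1 \<Longrightarrow> j \<in> {1..K} \<Longrightarrow> distr M borel (R l j) = zeta j"
    and "\<And>j. j \<in> {1..K} \<Longrightarrow> (AE x in zeta j. 0 \<le> x \<and> x \<le> 1)"
    and "\<And>j. j \<in> {1..K} \<Longrightarrow> mu j = (\<integral>x. x \<partial>zeta j)"
    and "\<And>l j. l \<ge> 1 \<Longrightarrow> j \<in> {1..K} \<Longrightarrow> distr M (count_space UNIV) (tau l j) = D"
    and "AE x in D. x \<le> d"
    and "m \<ge> 1" and "j \<in> {1..K}"
  shows "(let w = sqrt (ln (real T * (tol m)\<^sup>2) / (2 * real (n m))) + real m * real d / real (n m);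
              E = {\<omega> \<in> space M.
                    j \<in> act (odaaf_run K n pick (\<lambda>l i. R l i \<omega>) (\<lambda>l i. tau l i \<omega>) (m - 1))
                  \<and> \<bar>xbar (odaaf_run K n pick (\<lambda>l i. R l i \<omega>) (\<lambda>l i. tau l i \<omega>) m) j - mu j\<bar> > w}
          in E \<in> sets M \<and> measure M E \<le> 2 / (real T * (tol m)\<^sup>2))"
  proof -
  interpret bandit M K n pick R tau zeta mu D d j
  proof (rule bandit.intro[OF assms(1)], rule bandit_axioms.intro)
    show "1 \<le> K" using assms(2) by simp
    show "n 0 = 0" by (rule assms(4))
    show "strict_mono n" by (rule assms(5))
    show "\<And>m A. A \<noteq> {} \<Longrightarrow> pick m A \<in> A" by (rule assms(6))
    show "\<And>l j. R l j \<in> borel_measurable M" by (rule assms(7))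
    show "\<And>l j. tau l j \<in> measurable M (count_space UNIV)" by (rule assms(8))
    show "prob_space.indep_vars M (\<lambda>_. borel)
           (\<lambda>(l, j, b) \<omega>. if b then R l j \<omega> else real (tau l j \<omega>))
           ({1..} \<times> {1..K} \<times> UNIV)" by (rule assms(9))
    show "\<And>l j. l \<ge> 1 \<Longrightarrow> j \<in> {1..K} \<Longrightarrow> distr M borel (R l j) = zeta j" by (rule assms(10))
    show "\<And>j. j \<in> {1..K} \<Longrightarrow> (AE x in zeta j. 0 \<le> x \<and> x \<le> 1)" by (rule assms(11))
    show "\<And>j. j \<in> {1..K} \<Longrightarrow> mu j = (\<integral>x. x \<partial>zeta j)" by (rule assms(12))
    show "\<And>l j. l \<ge> 1 \<Longrightarrow> j \<in> {1..K} \<Longrightarrow> distr M (count_space UNIV) (tau l j) = D" by (rule assms(13))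
    show "AE x in D. x \<le> d" by (rule assms(14))
    show "j \<in> {1..K}" by (rule assms(16))
  qed
  show ?thesis by (rule final[OF assms(15) assms(3)])
qed

end
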